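(* Let $d\ge2$ and $\Phi_t:\mathbb M_d\to\mathbb M_d$, $\Phi_t(X)=\mathrm{Tr}(X)I_d-tX$, $t\in\mathbb R$. For $\alpha\in[1,d]$ with $\alpha=k+\theta$, $k=\lfloor\alpha\rfloor$, $\theta\in[0,1)$, let $t^\ast_\alpha:=\frac{k+\theta^2}{(k+\theta)^2}$. Then: (i) if $t\le0$, $\Phi_t$ is completely positive and $\tau(\Phi_t)=d$; (ii) if $0<t\le\frac1d$, $\Phi_t$ is completely positive and $\tau(\Phi_t)=d$; (iii) if $\frac1d<t<1$, then $\tau(\Phi_t)$ is the unique $\alpha\in(1,d)$ with $t=t^\ast_\alpha$; more explicitly, if $t\in(\frac1{k+1},\frac1k]$ for some $k\in\{1,\dots,d-1\}$, then $\tau(\Phi_t)=k+\theta(t)$ where $\theta(t)\in[0,1)$ is the unique solution in $[0,1)$ of $(t-1)\theta^2+2tk\theta+(tk^2-k)=0$; equivalently, for $t\in(\frac1{k+1},\frac1k)$, $\theta(t)=\frac{tk-\sqrt{k(t(k+1)-1)}}{1-t}$; and at $t=\frac1k$, $\theta(t)=0$, so $\tau(\Phi_{1/k})=k$; (iv) $\tau(\Phi_1)=1$.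
   Context: The Choi matrix of a linear $\Phi:\mathbb M_d\to\mathbb M_d$ is $C_\Phi=\sum_{i,j}E_{ij}\otimes\Phi(E_{ij})$. Schmidt coefficients $s_1(\psi)\ge\dots\ge s_d(\psi)\ge0$ of $\psi=\sum a_{ij}e_i\otimes e_j$ are the singular values of $[a_{ij}]$. For $\alpha\in[1,d]$ with $k=\lfloor\alpha\rfloor$, $\theta=\alpha-k$, $r=\lceil\alpha\rceil$, a unit vector $\psi$ is $\alpha$-admissible if $s_j(\psi)=0$ for $j\ge r+1$ and, when $\theta>0$, $s_{k+1}(\psi)\le\frac\theta k\sum_{j=1}^ks_j(\psi)$; $\mathcal V_\alpha$ is the set of these. A Hermitian-preserving $\Phi$ is in $\mathsf P_\alpha$ if $\langle\psi,C_\Phi\psi\rangle\ge0$ for all $\psi\in\mathcal V_\alpha$. For a Hermitian-preserving $\Phi\in\mathsf P_1$, the stability index is $\tau(\Phi):=\sup\{\alpha\in[1,d]:\Phi\in\mathsf P_\alpha\}$. *)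

theory Defs
  imports "Jordan_Normal_Form.Char_Poly" "Jordan_Normal_Form.Conjugate"
    "HOL-Computational_Algebra.Polynomial" "HOL-Library.Multiset"
begin

(* Matrices in M_d are complex d x d matrices (type complex mat with carrier_mat d d).
   C^d (x) C^d is identified with C^(d*d) via e_i (x) e_j  <->  e_(i*d+j)  (i,j < d). *)

definition mtrace :: "complex mat \<Rightarrow> complex" where
  "mtrace X = (\<Sum>i<dim_row X. X $$ (i,i))"

definition adj :: "complex mat \<Rightarrow> complex mat" where
  "adj A = mat (dim_col A) (dim_row A) (\<lambda>(i,j). cnj (A $$ (j,i)))"

definition Eunit :: "nat \<Rightarrow> nat \<Rightarrow> nat \<Rightarrow> complex mat" where
  "Eunit d i j = mat d d (\<lambda>(a,b). if a = i \<and> b = j then 1 else 0)"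

(* Choi matrix C_Phi = sum_ij E_ij (x) Phi(E_ij): entry ((i,k),(j,l)) = Phi(E_ij)_(k,l) *)
definition choi :: "nat \<Rightarrow> (complex mat \<Rightarrow> complex mat) \<Rightarrow> complex mat" where
  "choi d \<Phi> = mat (d*d) (d*d)
     (\<lambda>(p,q). \<Phi> (Eunit d (p div d) (q div d)) $$ (p mod d, q mod d))"

(* quadratic form <psi, C psi> (inner product antilinear in the first slot) *)
definition qform :: "complex mat \<Rightarrow> complex vec \<Rightarrow> complex" where
  "qform C \<psi> = (C *\<^sub>v \<psi>) \<bullet>c \<psi>"

definition coeff_mat :: "nat \<Rightarrow> complex vec \<Rightarrow> complex mat" where
  "coeff_mat d \<psi> = mat d d (\<lambda>(i,j). \<psi> $ (i*d + j))"

definition singular_values :: "complex mat \<Rightarrow> real list" where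
  "singular_values A = rev (sorted_list_of_multiset
      (image_mset (\<lambda>z. sqrt (Re z)) (proots (char_poly (adj A * A)))))"

(* Schmidt coefficient s_j(psi), 1-indexed *)
definition schmidt :: "nat \<Rightarrow> complex vec \<Rightarrow> nat \<Rightarrow> real" where
  "schmidt d \<psi> j = singular_values (coeff_mat d \<psi>) ! (j - 1)"

definition unit_vec_dd :: "nat \<Rightarrow> complex vec \<Rightarrow> bool" where
  "unit_vec_dd d \<psi> \<longleftrightarrow> \<psi> \<in> carrier_vec (d*d) \<and> (\<Sum>i<d*d. (cmod (\<psi> $ i))\<^sup>2) = 1"

definition admissible :: "nat \<Rightarrow> real \<Rightarrow> complex vec \<Rightarrow> bool" where
  "admissible d \<alpha> \<psi> \<longleftrightarrow>
     (let k = nat \<lfloor>\<alpha>\<rfloor>; \<theta> = \<alpha> - real k; r = nat \<lceil>\<alpha>\<rceil> in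
       unit_vec_dd d \<psi> \<and>
       (\<forall>j. r + 1 \<le> j \<and> j \<le> d \<longrightarrow> schmidt d \<psi> j = 0) \<and>
       (\<theta> > 0 \<longrightarrow> schmidt d \<psi> (k+1) \<le> \<theta> / real k * (\<Sum>j=1..k. schmidt d \<psi> j)))"

definition V_alpha :: "nat \<Rightarrow> real \<Rightarrow> complex vec set" where
  "V_alpha d \<alpha> = {\<psi>. admissible d \<alpha> \<psi>}"

definition hermitian_preserving :: "nat \<Rightarrow> (complex mat \<Rightarrow> complex mat) \<Rightarrow> bool" where
  "hermitian_preserving d \<Phi> \<longleftrightarrow>
     (\<forall>X \<in> carrier_mat d d. adj X = X \<longrightarrow> \<Phi> X \<in> carrier_mat d d \<and> adj (\<Phi> X) = \<Phi> X)"

(* membership in P_alpha; "\<ge> 0" in C means real and nonnegative *)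
definition in_P :: "nat \<Rightarrow> real \<Rightarrow> (complex mat \<Rightarrow> complex mat) \<Rightarrow> bool" where
  "in_P d \<alpha> \<Phi> \<longleftrightarrow> hermitian_preserving d \<Phi> \<and>
     (\<forall>\<psi> \<in> V_alpha d \<alpha>. Im (qform (choi d \<Phi>) \<psi>) = 0 \<and> Re (qform (choi d \<Phi>) \<psi>) \<ge> 0)"

definition stability_index :: "nat \<Rightarrow> (complex mat \<Rightarrow> complex mat) \<Rightarrow> real" where
  "stability_index d \<Phi> = Sup {\<alpha>. 1 \<le> \<alpha> \<and> \<alpha> \<le> real d \<and> in_P d \<alpha> \<Phi>}"

definition psd :: "nat \<Rightarrow> complex mat \<Rightarrow> bool" where
  "psd m X \<longleftrightarrow> X \<in> carrier_mat m m \<and> adj X = X \<and>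
     (\<forall>v \<in> carrier_vec m. Im (qform X v) = 0 \<and> Re (qform X v) \<ge> 0)"

(* (id_n (x) Phi) applied to X in M_n (x) M_d = M_n(M_d), acting blockwise *)
definition ampliation :: "nat \<Rightarrow> nat \<Rightarrow> (complex mat \<Rightarrow> complex mat) \<Rightarrow> complex mat \<Rightarrow> complex mat" where
  "ampliation n d \<Phi> X = mat (n*d) (n*d)
     (\<lambda>(p,q). \<Phi> (mat d d (\<lambda>(i,j). X $$ ((p div d)*d + i, (q div d)*d + j))) $$ (p mod d, q mod d))"

definition completely_positive :: "nat \<Rightarrow> (complex mat \<Rightarrow> complex mat) \<Rightarrow> bool" where
  "completely_positive d \<Phi> \<longleftrightarrow>
     (\<forall>n X. psd (n*d) X \<longrightarrow> psd (n*d) (ampliation n d \<Phi> X))"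

definition Phi_t :: "nat \<Rightarrow> real \<Rightarrow> complex mat \<Rightarrow> complex mat" where
  "Phi_t d t X = mtrace X \<cdot>\<^sub>m 1\<^sub>m d - complex_of_real t \<cdot>\<^sub>m X"

definition tstar :: "real \<Rightarrow> real" where
  "tstar \<alpha> = (let k = real_of_int \<lfloor>\<alpha>\<rfloor>; \<theta> = \<alpha> - k in (k + \<theta>\<^sup>2) / (k + \<theta>)\<^sup>2)"

end

theory Submission
  imports Defs "Jordan_Normal_Form.Schur_Decomposition"
begin

lemma adj_carrier[simp]: "A \<in> carrier_mat n m \<Longrightarrow> adj A \<in> carrier_mat m n"
  unfolding adj_def by auto

lemma adj_dims[simp]: "dim_row (adj A) = dim_col A" "dim_col (adj A) = dim_row A"
  unfolding adj_def by auto

lemma adj_index[simp]: "i < dim_col A \<Longrightarrow> j < dim_row A \<Longrightarrow> adj A $$ (i,j) = cnj (A $$ (j,i))"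
  unfolding adj_def by auto

lemma adj_adj[simp]: "adj (adj A) = A"
  by (rule eq_matI, auto)

lemma adj_mult: assumes "A \<in> carrier_mat n m" "B \<in> carrier_mat m p"
  shows "adj (A * B) = adj B * adj A"
  by (rule eq_matI, insert assms, auto simp: scalar_prod_def cnj_sum intro!: sum.cong)

lemma adj_one[simp]: "adj (1\<^sub>m n) = 1\<^sub>m n"
  by (rule eq_matI, auto)

lemma adj_block: assumes P: "P \<in> carrier_mat k k"
  shows "adj (four_block_mat (1\<^sub>m 1) (0\<^sub>m 1 k) (0\<^sub>m k 1) P) = four_block_mat (1\<^sub>m 1) (0\<^sub>m 1 k) (0\<^sub>m k 1) (adj P)"
  by (rule eq_matI, insert P, auto simp: index_mat_four_block)

lemma cscalar_smult: assumes "v \<in> carrier_vec n" "w \<in> carrier_vec n"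
  shows "(a \<cdot>\<^sub>v v) \<bullet>c (b \<cdot>\<^sub>v w) = a * cnj b * (v \<bullet>c w)"
  using assms by (auto simp: scalar_prod_def sum_distrib_left intro!: sum.cong)

lemma cscalar_self: assumes "v \<in> carrier_vec n"
  shows "v \<bullet>c v = of_real (\<Sum>i<n. (cmod (v $ i))\<^sup>2)"
  using assms by (auto simp: scalar_prod_def atLeast0LessThan intro!: sum.cong,
   metis complex_norm_square of_real_power)

definition cnormalize :: "complex vec \<Rightarrow> complex vec" where
  "cnormalize v = complex_of_real (1 / sqrt (Re (v \<bullet>c v))) \<cdot>\<^sub>v v"

lemma cnormalize_carrier[simp]: "v \<in> carrier_vec n \<Longrightarrow> cnormalize v \<in> carrier_vec n"
  unfolding cnormalize_def by auto

lemma cscalar_self_pos: assumes "v \<in> carrier_vec n" "v \<noteq> 0\<^sub>v n"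
  shows "Re (v \<bullet>c v) > 0" "Im (v \<bullet>c v) = 0"
proof -
  have "v \<bullet>c v > 0" using conjugate_square_greater_0_vec[of v] assms by auto
  thus "Re (v \<bullet>c v) > 0" "Im (v \<bullet>c v) = 0" by (auto simp: less_complex_def)
qed

lemma cnormalize_unit: assumes "v \<in> carrier_vec n" "v \<noteq> 0\<^sub>v n"
  shows "cnormalize v \<bullet>c cnormalize v = 1"
proof -
  note p = cscalar_self_pos[OF assms]
  have "cnormalize v \<bullet>c cnormalize v = complex_of_real (1 / sqrt (Re (v \<bullet>c v)))
     * cnj (complex_of_real (1 / sqrt (Re (v \<bullet>c v)))) * (v \<bullet>c v)"
    unfolding cnormalize_def by (rule cscalar_smult[OF assms(1) assms(1)])
  also have "\<dots> = complex_of_real (1 / sqrt (Re (v \<bullet>c v)) * (1 / sqrt (Re (v \<bullet>c v)))) * (v \<bullet>c v)"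
    by (simp only: complex_cnj_complex_of_real of_real_mult)
  also have "1 / sqrt (Re (v \<bullet>c v)) * (1 / sqrt (Re (v \<bullet>c v))) = 1 / Re (v \<bullet>c v)"
    using p by (simp add: real_sqrt_mult[symmetric])
  also have "v \<bullet>c v = complex_of_real (Re (v \<bullet>c v))" using p by (simp add: complex_eq_iff)
  finally show ?thesis using p by (simp add: of_real_mult[symmetric] del: of_real_mult)
qed

lemma cnormalize_nz: assumes "v \<in> carrier_vec n" "v \<noteq> 0\<^sub>v n"
  shows "cnormalize v \<noteq> 0\<^sub>v n"
  using cnormalize_unit[OF assms] by auto

lemma cnormalize_id: assumes "v \<in> carrier_vec n" "v \<bullet>c v = 1"
  shows "cnormalize v = v"
  using assms unfolding cnormalize_def by simp

lemma corth_normalize: assumes ws: "set ws \<subseteq> carrier_vec n" and orth: "corthogonal ws"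
  shows "\<And>i j. i < length ws \<Longrightarrow> j < length ws \<Longrightarrow>
     map cnormalize ws ! i \<bullet>c map cnormalize ws ! j = (if i = j then 1 else 0)"
proof -
  fix i j assume i: "i < length ws" and j: "j < length ws"
  have ci: "ws ! i \<in> carrier_vec n" and cj: "ws ! j \<in> carrier_vec n" using ws i j by auto
  have nz: "ws ! k \<noteq> 0\<^sub>v n" if "k < length ws" for k
  proof
    assume "ws ! k = 0\<^sub>v n"
    hence "ws ! k \<bullet>c ws ! k = 0" by simp
    thus False using corthogonalD[OF orth that that] by simp
  qed
  show "map cnormalize ws ! i \<bullet>c map cnormalize ws ! j = (if i = j then 1 else 0)"
  proof (cases "i = j")
    case True thus ?thesis using cnormalize_unit[OF ci nz[OF i]] i by simp
  next
    case False
    have "ws ! i \<bullet>c ws ! j = 0" using corthogonalD[OF orth i j] False by simp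
    thus ?thesis using False i j unfolding cnormalize_def
      by (simp add: cscalar_smult[OF ci cj])
  qed
qed

lemma unit_cols_adj: assumes ws: "set ws \<subseteq> carrier_vec n" "length ws = n"
  and orth: "\<And>i j. i < n \<Longrightarrow> j < n \<Longrightarrow> ws!i \<bullet>c ws!j = (if i = j then 1 else 0)"
  shows "adj (mat_of_cols n ws) * mat_of_cols n ws = 1\<^sub>m n"
proof (rule eq_matI)
  fix i j assume i: "i < dim_row (1\<^sub>m n)" and j: "j < dim_col (1\<^sub>m n)"
  have ci: "ws ! i \<in> carrier_vec n" and cj: "ws ! j \<in> carrier_vec n" using ws i j by auto
  have "(adj (mat_of_cols n ws) * mat_of_cols n ws) $$ (i,j) = ws!j \<bullet>c ws!i"
    using i j ci cj ws by (auto simp: scalar_prod_def mat_of_cols_def intro!: sum.cong)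
  thus "(adj (mat_of_cols n ws) * mat_of_cols n ws) $$ (i,j) = 1\<^sub>m n $$ (i,j)"
    using orth[of j i] i j by auto
qed (insert ws, auto)

lemma corthogonal_inv_adj: assumes ws: "set ws \<subseteq> carrier_vec n" "length ws = n"
  and orth: "\<And>i j. i < n \<Longrightarrow> j < n \<Longrightarrow> ws!i \<bullet>c ws!j = (if i = j then 1 else 0)"
  shows "corthogonal_inv (mat_of_cols n ws) = adj (mat_of_cols n ws)"
proof (rule eq_matI)
  fix i j assume i: "i < dim_row (adj (mat_of_cols n ws))" and j: "j < dim_col (adj (mat_of_cols n ws))"
  hence i': "i < n" and j': "j < n" using ws by auto
  have ci: "ws ! i \<in> carrier_vec n" using ws i' by auto
  have vv: "vec n (($) (ws!i)) = ws!i" using ci by auto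
  show "corthogonal_inv (mat_of_cols n ws) $$ (i,j) = adj (mat_of_cols n ws) $$ (i,j)"
    using i' j' ci orth[OF i' i'] ws vv unfolding corthogonal_inv_def vec_inv_def
    by (auto simp: mat_of_cols_def mat_of_rows_def)
qed (auto simp: corthogonal_inv_def)

theorem unitary_schur:
  assumes A: "(A::complex mat) \<in> carrier_mat n n"
      and c: "char_poly A = (\<Prod> (e :: complex) \<leftarrow> es. [:- e, 1:])"
  shows "\<exists>B P Q. similar_mat_wit A B P Q \<and> upper_triangular B \<and> diag_mat B = es \<and> Q = adj P"
  using assms
proof (induct es arbitrary: n A)
  case Nil
  have n: "n = 0" using degree_monic_char_poly[OF Nil.prems(1)] Nil.prems(2) by auto
  show ?case
    by (rule exI[of _ A], rule exI[of _ "1\<^sub>m n"], rule exI[of _ "1\<^sub>m n"],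
      insert Nil.prems(1) n, auto intro: similar_mat_wit_refl simp: diag_mat_def upper_triangular_def)
next
  case (Cons e es n A)
  let ?n1 = "n - 1"
  from Cons have A: "A \<in> carrier_mat n n" and dim: "dim_row A = n" by auto
  let ?cp = "char_poly A"
  from Cons(3)
  have cp: "?cp = [: -e, 1 :] * (\<Prod>e \<leftarrow> es. [:- e, 1:])" by auto
  have mon: "monic (\<Prod>e\<leftarrow> es. [:- e, 1:])" by (rule monic_prod_list, auto)
  have deg: "degree ?cp = Suc (degree (\<Prod>e\<leftarrow> es. [:- e, 1:]))" unfolding cp
    by (subst degree_mult_eq, insert mon, auto)
  with degree_monic_char_poly[OF A] have n: "n \<noteq> 0" by auto
  have e: "eigenvalue A e" 
    unfolding eigenvalue_root_char_poly[OF A] cp by simp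
  define v0 where "v0 = find_eigenvector A e"
  from find_eigenvector[OF A e] have ev: "eigenvector A v0 e" unfolding v0_def .
  from this[unfolded eigenvector_def]
  have v0c[simp]: "v0 \<in> carrier_vec n" and v00: "v0 \<noteq> 0\<^sub>v n" and ev0: "A *\<^sub>v v0 = e \<cdot>\<^sub>v v0" using A by auto
  define v where "v = cnormalize v0"
  have v[simp]: "v \<in> carrier_vec n" unfolding v_def by simp
  have v0: "v \<noteq> 0\<^sub>v n" unfolding v_def by (rule cnormalize_nz[OF v0c v00])
  have vunit: "v \<bullet>c v = 1" unfolding v_def by (rule cnormalize_unit[OF v0c v00])
  have eigen[simp]: "A *\<^sub>v v = e \<cdot>\<^sub>v v" unfolding v_def cnormalize_def
    using ev0 A by (simp add: mult_mat_vec[OF A v0c] smult_smult_assoc mult.commute)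
  define b where "b = basis_completion v"
  define ws0 where "ws0 = gram_schmidt n b"
  define ws where "ws = map cnormalize ws0"
  define W where "W = mat_of_cols n ws"
  define W' where "W' = corthogonal_inv W"
  define A' where "A' = W' * A * W"
  obtain A1 A2 A0 A3 where splitA': "split_block A' 1 1 = (A1,A2,A0,A3)"
    by (cases "split_block A' 1 1", auto)
  interpret cof_vec_space n "TYPE(complex)" .
  from basis_completion[OF v v0, folded b_def]
  have span_b: "span (set b) = carrier_vec n" and dist_b: "distinct b" 
    and indep: "\<not> lin_dep (set b)" and b: "set b \<subseteq> carrier_vec n" and hdb: "hd b = v" 
    and len_b: "length b = n" by auto
  from hdb len_b n obtain vs where bv: "b = v # vs" by (cases b, auto)
  from gram_schmidt_result[OF b dist_b indep refl, folded ws0_def]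
  have ws0: "set ws0 \<subseteq> carrier_vec n" "corthogonal ws0" "length ws0 = n" 
    by (auto simp: len_b)
  from gram_schmidt_hd[OF v, of vs, folded bv] have hdws0: "hd ws0 = v" unfolding ws0_def .
  have wsc: "set ws \<subseteq> carrier_vec n" "length ws = n" using ws0 unfolding ws_def by auto
  have wsorth: "\<And>i j. i < n \<Longrightarrow> j < n \<Longrightarrow> ws!i \<bullet>c ws!j = (if i = j then 1 else 0)"
    using corth_normalize[OF ws0(1,2)] ws0(3) unfolding ws_def by auto
  have wscorth: "corthogonal ws" using wsorth wsc by (auto intro!: corthogonalI)
  have hdws: "hd ws = v" unfolding ws_def using hdws0 ws0(3) n
    by (cases ws0, auto simp: cnormalize_id[OF v vunit])
  have W: "W \<in> carrier_mat n n"
    using wsc unfolding W_def using mat_of_cols_carrier(1)[of n ws] by auto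
  have W'adj: "W' = adj W" unfolding W'_def W_def by (rule corthogonal_inv_adj[OF wsc wsorth])
  have W': "W' \<in> carrier_mat n n" unfolding W'adj using W by simp
  have W'W: "W' * W = 1\<^sub>m n" unfolding W'adj W_def by (rule unit_cols_adj[OF wsc wsorth])
  hence WW': "W * W' = 1\<^sub>m n" using mat_mult_left_right_inverse[OF W' W] W' W by auto
  have A': "A' \<in> carrier_mat n n" using W W' A unfolding A'_def by auto
  have A'A_wit: "similar_mat_wit A' A W' W"
    by (rule similar_mat_witI[of _ _ n], insert W W' A A' W'W WW', auto simp: A'_def)
  hence A'A: "similar_mat A' A" unfolding similar_mat_def by blast
  from similar_mat_wit_sym[OF A'A_wit] have simAA': "similar_mat_wit A A' W W'" by auto
  let ?f = "(\<lambda> i. if i = 0 then e else 0)"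
  have col0: "col A' 0 = vec n ?f"
    unfolding A'_def W'_def W_def
    using corthogonal_col_ev_0[OF A v v0 eigen n hdws wsc(1) wscorth wsc(2)].
  from A' n have "dim_row A' = 1 + ?n1" "dim_col A' = 1 + ?n1" by auto
  from split_block[OF splitA' this] have A2: "A2 \<in> carrier_mat 1 ?n1"
    and A3: "A3 \<in> carrier_mat ?n1 ?n1" 
    and A'block: "A' = four_block_mat A1 A2 A0 A3" by auto
  have A1id: "A1 = mat 1 1 (\<lambda> _. e)"
    using splitA'[unfolded split_block_def Let_def] arg_cong[OF col0, of "\<lambda> v. v $ 0"] A' n
    by (auto simp: col_def)
  have A1: "A1 \<in> carrier_mat 1 1" unfolding A1id by auto
  {
    fix i
    assume "i < ?n1"
    with arg_cong[OF col0, of "\<lambda> v. v $ Suc i"] A'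
    have "A' $$ (Suc i, 0) = 0" by auto
  } note A'0 = this
  have A0id: "A0 = 0\<^sub>m ?n1 1"
    using splitA'[unfolded split_block_def Let_def] A'0 A' by auto
  have A0: "A0 \<in> carrier_mat ?n1 1" unfolding A0id by auto
  from cp char_poly_similar[OF A'A]
  have cp: "char_poly A' = [: -e,1 :] * (\<Prod> e \<leftarrow> es. [:- e, 1:])" by simp
  also have "char_poly A' = char_poly A1 * char_poly A3" 
    unfolding A'block A0id
    by (rule char_poly_four_block_zeros_col[OF A1 A2 A3])
  also have "char_poly A1 = [: -e,1 :]"
    by (simp add: A1id char_poly_defs det_def sign_def)
  finally have cp: "char_poly A3 = (\<Prod> e \<leftarrow> es. [:- e, 1:])"
    by (metis mult_cancel_left pCons_eq_0_iff zero_neq_one)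
  from Cons(1)[OF A3 cp] obtain B P' Q' where
    simIH: "similar_mat_wit A3 B P' Q'" and ut: "upper_triangular B" and diag: "diag_mat B = es"
    and Q'P': "Q' = adj P'" by blast
  from similar_mat_witD2[OF A3 simIH] 
  have B: "B \<in> carrier_mat ?n1 ?n1" and P': "P' \<in> carrier_mat ?n1 ?n1" and Q': "Q' \<in> carrier_mat ?n1 ?n1" 
    and PQ': "P' * Q' = 1\<^sub>m ?n1" by auto
  let ?P' = "four_block_mat (1\<^sub>m 1) (0\<^sub>m 1 ?n1) (0\<^sub>m ?n1 1) P'"
  let ?Q' = "four_block_mat (1\<^sub>m 1) (0\<^sub>m 1 ?n1) (0\<^sub>m ?n1 1) Q'"
  define C where "C = four_block_mat A1 (A2 * P') A0 B"
  have A0_eq: "A0 = P' * A0 * 1\<^sub>m 1" unfolding A0id using P' by auto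
  have simA'C: "similar_mat_wit A' C ?P' ?Q'" unfolding A'block C_def
    by (rule similar_mat_wit_four_block[OF similar_mat_wit_refl[OF A1] simIH _ A0_eq A1 A3 A0],
    insert PQ' A2 P' Q', auto)
  have ut1: "upper_triangular A1" unfolding A1id by auto
  have utC: "upper_triangular C" unfolding C_def A0id
    by (intro upper_triangular_four_block[OF _ B ut1 ut], auto simp: A1id)
  from A1id have diagA1: "diag_mat A1 = [e]" unfolding diag_mat_def by auto
  from diag_four_block_mat[OF A1 B] have diagC: "diag_mat C = e # es" unfolding diag diagA1 C_def by simp
  have P'b: "?P' \<in> carrier_mat n n" using P' n by auto
  have "adj (W * ?P') = adj ?P' * adj W" by (rule adj_mult[OF W P'b])
  also have "adj ?P' = ?Q'" unfolding Q'P' by (rule adj_block[OF P'])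
  finally have QP: "?Q' * W' = adj (W * ?P')" unfolding W'adj by simp
  show ?case
    by (rule exI[of _ C], rule exI[of _ "W * ?P'"], rule exI[of _ "?Q' * W'"],
      insert utC diagC QP similar_mat_wit_trans[OF simAA' simA'C], auto)
qed

lemma cmult1: "z * cnj z = (complex_of_real (cmod z))\<^sup>2"
  by (metis complex_norm_square of_real_power)
lemma cmult2: "cnj z * z = (complex_of_real (cmod z))\<^sup>2"
  by (metis cmult1 mult.commute)

lemma cs_real: fixes x y :: "'a \<Rightarrow> real" assumes "finite S"
  shows "(\<Sum>i\<in>S. x i * y i)\<^sup>2 \<le> (\<Sum>i\<in>S. (x i)\<^sup>2) * (\<Sum>i\<in>S. (y i)\<^sup>2)"
proof -
  have "0 \<le> (\<Sum>i\<in>S. \<Sum>j\<in>S. (x i * y j - x j * y i)\<^sup>2)" by (intro sum_nonneg) auto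
  also have "\<dots> = (\<Sum>i\<in>S. \<Sum>j\<in>S. (x i)\<^sup>2 * (y j)\<^sup>2 + (x j)\<^sup>2 * (y i)\<^sup>2 - 2 * ((x i * y i) * (x j * y j)))"
    by (intro sum.cong refl) (simp add: power2_eq_square algebra_simps)
  also have "\<dots> = 2 * ((\<Sum>i\<in>S. (x i)\<^sup>2) * (\<Sum>i\<in>S. (y i)\<^sup>2)) - 2 * (\<Sum>i\<in>S. x i * y i)\<^sup>2"
  proof -
    have e1: "(\<Sum>i\<in>S. \<Sum>j\<in>S. (x i)\<^sup>2 * (y j)\<^sup>2) = (\<Sum>i\<in>S. (x i)\<^sup>2) * (\<Sum>i\<in>S. (y i)\<^sup>2)"
      by (simp add: sum_product)
    have e2: "(\<Sum>i\<in>S. \<Sum>j\<in>S. (x j)\<^sup>2 * (y i)\<^sup>2) = (\<Sum>i\<in>S. (x i)\<^sup>2) * (\<Sum>i\<in>S. (y i)\<^sup>2)"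
      by (subst sum.swap) (simp add: sum_product)
    have e3: "(\<Sum>i\<in>S. \<Sum>j\<in>S. (x i * y i) * (x j * y j)) = (\<Sum>i\<in>S. x i * y i)\<^sup>2"
      by (simp add: sum_product power2_eq_square)
    have sp: "(\<Sum>i\<in>S. \<Sum>j\<in>S. (x i)\<^sup>2 * (y j)\<^sup>2 + (x j)\<^sup>2 * (y i)\<^sup>2 - 2 * ((x i * y i) * (x j * y j)))
      = (\<Sum>i\<in>S. \<Sum>j\<in>S. (x i)\<^sup>2 * (y j)\<^sup>2) + (\<Sum>i\<in>S. \<Sum>j\<in>S. (x j)\<^sup>2 * (y i)\<^sup>2)
        - 2 * (\<Sum>i\<in>S. \<Sum>j\<in>S. (x i * y i) * (x j * y j))"
      by (simp add: sum_subtractf sum.distrib sum_distrib_left)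
    show ?thesis unfolding sp e1 e2 e3 by simp
  qed
  finally show ?thesis by simp
qed

lemma cs_real_sqrt: fixes x y :: "'a \<Rightarrow> real" assumes "finite S"
  shows "(\<Sum>i\<in>S. \<bar>x i\<bar> * \<bar>y i\<bar>) \<le> sqrt (\<Sum>i\<in>S. (x i)\<^sup>2) * sqrt (\<Sum>i\<in>S. (y i)\<^sup>2)"
proof -
  have "(\<Sum>i\<in>S. \<bar>x i\<bar> * \<bar>y i\<bar>)\<^sup>2 \<le> (\<Sum>i\<in>S. \<bar>x i\<bar>\<^sup>2) * (\<Sum>i\<in>S. \<bar>y i\<bar>\<^sup>2)"
    by (rule cs_real[OF assms])
  hence "(\<Sum>i\<in>S. \<bar>x i\<bar> * \<bar>y i\<bar>)\<^sup>2 \<le> (\<Sum>i\<in>S. (x i)\<^sup>2) * (\<Sum>i\<in>S. (y i)\<^sup>2)" by simp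
  hence "sqrt ((\<Sum>i\<in>S. \<bar>x i\<bar> * \<bar>y i\<bar>)\<^sup>2) \<le> sqrt ((\<Sum>i\<in>S. (x i)\<^sup>2) * (\<Sum>i\<in>S. (y i)\<^sup>2))"
    using real_sqrt_le_mono by blast
  moreover have "0 \<le> (\<Sum>i\<in>S. \<bar>x i\<bar> * \<bar>y i\<bar>)" by (intro sum_nonneg) auto
  ultimately show ?thesis by (simp add: real_sqrt_mult)
qed

lemma cs_complex: assumes "finite S"
  shows "cmod (\<Sum>i\<in>S. cnj (a i) * b i) \<le> sqrt (\<Sum>i\<in>S. (cmod (a i))\<^sup>2) * sqrt (\<Sum>i\<in>S. (cmod (b i))\<^sup>2)"
proof -
  have "cmod (\<Sum>i\<in>S. cnj (a i) * b i) \<le> (\<Sum>i\<in>S. cmod (cnj (a i) * b i))" by (rule norm_sum)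
  also have "\<dots> = (\<Sum>i\<in>S. \<bar>cmod (a i)\<bar> * \<bar>cmod (b i)\<bar>)" by (simp add: norm_mult)
  also have "\<dots> \<le> sqrt (\<Sum>i\<in>S. (cmod (a i))\<^sup>2) * sqrt (\<Sum>i\<in>S. (cmod (b i))\<^sup>2)"
    by (rule cs_real_sqrt[OF assms])
  finally show ?thesis .
qed

lemma mtrace_comm: assumes "X \<in> carrier_mat n m" "Y \<in> carrier_mat m n"
  shows "mtrace (X * Y) = mtrace (Y * X)"
  using assms unfolding mtrace_def
  by (simp add: scalar_prod_def atLeast0LessThan, subst sum.swap, simp add: mult.commute)

lemma sum_list_singletons: "sum_list (map (\<lambda>x. {#x#}) xs) = mset xs"
  by (induct xs) auto

lemma proots_linear_prod: "proots (\<Prod>e\<leftarrow>es. [:- e, 1:]) = mset (es :: complex list)"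
proof -
  have "proots (\<Prod>e\<leftarrow>es. [:- e, 1:]) = proots (\<Prod>p\<leftarrow>map (\<lambda>e. [:- e, 1:]) es. p)"
    by (simp add: comp_def)
  also have "\<dots> = sum_list (map proots (map (\<lambda>e. [:- e, 1:]) es))"
    by (rule proots_prod_list) auto
  also have "\<dots> = sum_list (map (\<lambda>x. {#x#}) es)" by (simp add: comp_def proots_linear_factor)
  finally show ?thesis by (simp add: sum_list_singletons)
qed

lemma mtrace_adj_mult: assumes "M \<in> carrier_mat n m"
  shows "mtrace (adj M * M) = of_real (\<Sum>j<m. \<Sum>i<n. (cmod (M $$ (i,j)))\<^sup>2)"
  using assms unfolding mtrace_def
  by (auto simp: scalar_prod_def atLeast0LessThan cmult1 cmult2 intro!: sum.cong)

lemma sv_main: assumes A: "A \<in> carrier_mat d d"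
  shows "\<exists>\<sigma> :: nat \<Rightarrow> real. mset (singular_values A) = mset (map \<sigma> [0..<d]) \<and> (\<forall>j. \<sigma> j \<ge> 0) \<and>
     (\<Sum>j<d. (\<sigma> j)\<^sup>2) = (\<Sum>j<d. \<Sum>i<d. (cmod (A $$ (i,j)))\<^sup>2) \<and> cmod (mtrace A) \<le> (\<Sum>j<d. \<sigma> j)"
proof -
  define H where "H = adj A * A"
  have H: "H \<in> carrier_mat d d" unfolding H_def using A by auto
  obtain es where es: "char_poly H = (\<Prod> a \<leftarrow> es. [:- a, 1:])" and les: "length es = d"
    using char_poly_factorized[OF H] by blast
  obtain B P Q where sim: "similar_mat_wit H B P Q" and ut: "upper_triangular B"
    and dg: "diag_mat B = es" and QP: "Q = adj P"
    using unitary_schur[OF H es] by blast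
  from similar_mat_witD2[OF H sim] have B: "B \<in> carrier_mat d d" and P: "P \<in> carrier_mat d d"
    and Q: "Q \<in> carrier_mat d d" and PQ: "P * Q = 1\<^sub>m d" and QP1: "Q * P = 1\<^sub>m d" and HB: "H = P * B * Q"
    by auto
  from similar_mat_witD2[OF B similar_mat_wit_sym[OF sim]] have BH: "B = Q * H * P" by auto
  define M where "M = A * P"
  have M: "M \<in> carrier_mat d d" unfolding M_def using A P by auto
  have BM: "B = adj M * M"
  proof -
    have "B = adj P * (adj A * A) * P" using BH QP H_def by simp
    also have "\<dots> = adj P * ((adj A * A) * P)"
      by (rule assoc_mult_mat[of _ d d _ d _ d]) (insert A P, auto)
    also have "(adj A * A) * P = adj A * (A * P)"
      by (rule assoc_mult_mat[of _ d d _ d _ d]) (insert A P, auto)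
    also have "adj P * (adj A * (A * P)) = (adj P * adj A) * (A * P)"
      by (rule assoc_mult_mat[of _ d d _ d _ d, symmetric]) (insert A P, auto)
    also have "adj P * adj A = adj M" unfolding M_def using adj_mult[OF A P] by simp
    finally show ?thesis unfolding M_def .
  qed
  define \<sigma> where "\<sigma> j = sqrt (\<Sum>i<d. (cmod (M $$ (i,j)))\<^sup>2)" for j
  have Bjj: "B $$ (j,j) = of_real ((\<sigma> j)\<^sup>2)" if j: "j < d" for j
  proof -
    have "B $$ (j,j) = (\<Sum>i<d. cnj (M $$ (i,j)) * M $$ (i,j))"
      unfolding BM using M j by (simp add: scalar_prod_def atLeast0LessThan)
    also have "\<dots> = of_real (\<Sum>i<d. (cmod (M $$ (i,j)))\<^sup>2)"
      by (simp add: cmult1 cmult2)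
    moreover have "(\<Sum>i<d. (cmod (M $$ (i,j)))\<^sup>2) \<ge> 0" by (intro sum_nonneg) auto
    ultimately show ?thesis unfolding \<sigma>_def by simp
  qed
  have esd: "es = map (\<lambda>j. B $$ (j,j)) [0..<d]" using dg[symmetric] B unfolding diag_mat_def by auto
  have cpH: "proots (char_poly H) = mset es" unfolding es by (rule proots_linear_prod)
  have nn0: "\<sigma> j \<ge> 0" for j unfolding \<sigma>_def by (simp add: sum_nonneg)
  have ms: "mset (singular_values A) = mset (map \<sigma> [0..<d])"
  proof -
    have "mset (singular_values A) = image_mset (\<lambda>z. sqrt (Re z)) (mset es)"
      unfolding singular_values_def H_def[symmetric] cpH by simp
    also have "\<dots> = mset (map (\<lambda>j. sqrt (Re (B $$ (j,j)))) [0..<d])" unfolding esd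
      by (simp add: multiset.map_comp comp_def)
    also have "map (\<lambda>j. sqrt (Re (B $$ (j,j)))) [0..<d] = map \<sigma> [0..<d]"
      by (rule map_cong[OF refl]) (simp add: Bjj nn0)
    finally show ?thesis .
  qed
  have nn: "\<forall>j. \<sigma> j \<ge> 0" using nn0 by simp
  have trB: "mtrace B = mtrace H"
  proof -
    have "mtrace B = mtrace (Q * (H * P))" using BH Q H P by (simp add: assoc_mult_mat[of _ d d _ d _ d])
    also have "\<dots> = mtrace ((H * P) * Q)" by (rule mtrace_comm[OF Q], insert H P, auto)
    also have "(H * P) * Q = H" using H P Q PQ by (simp add: assoc_mult_mat[of _ d d _ d _ d])
    finally show ?thesis .
  qed
  have sq: "(\<Sum>j<d. (\<sigma> j)\<^sup>2) = (\<Sum>j<d. \<Sum>i<d. (cmod (A $$ (i,j)))\<^sup>2)"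
  proof -
    have "of_real (\<Sum>j<d. (\<sigma> j)\<^sup>2) = mtrace B"
      unfolding mtrace_def using B by (simp add: Bjj)
    also have "\<dots> = mtrace H" by (rule trB)
    also have "\<dots> = of_real (\<Sum>j<d. \<Sum>i<d. (cmod (A $$ (i,j)))\<^sup>2)"
      unfolding H_def by (rule mtrace_adj_mult[OF A])
    finally show ?thesis by (simp only: of_real_eq_iff)
  qed
  have tr: "cmod (mtrace A) \<le> (\<Sum>j<d. \<sigma> j)"
  proof -
    have "mtrace A = mtrace (A * (P * Q))" using A PQ by simp
    also have "\<dots> = mtrace (M * Q)" unfolding M_def using A P Q by (simp add: assoc_mult_mat[of _ d d _ d _ d])
    also have "\<dots> = mtrace (Q * M)" by (rule mtrace_comm[OF M Q])
    also have "\<dots> = (\<Sum>j<d. \<Sum>i<d. cnj (P $$ (i,j)) * M $$ (i,j))"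
      unfolding mtrace_def QP using P M by (simp add: scalar_prod_def atLeast0LessThan)
    finally have "cmod (mtrace A) \<le> (\<Sum>j<d. cmod (\<Sum>i<d. cnj (P $$ (i,j)) * M $$ (i,j)))"
      by (simp add: norm_sum)
    also have "\<dots> \<le> (\<Sum>j<d. sqrt (\<Sum>i<d. (cmod (P $$ (i,j)))\<^sup>2) * \<sigma> j)"
      unfolding \<sigma>_def by (intro sum_mono cs_complex) auto
    also have "\<dots> = (\<Sum>j<d. \<sigma> j)"
    proof (intro sum.cong refl)
      fix j assume j: "j \<in> {..<d}"
      have e1: "(Q * P) $$ (j,j) = of_real (\<Sum>i<d. (cmod (P $$ (i,j)))\<^sup>2)"
        unfolding QP using P j by (simp add: scalar_prod_def atLeast0LessThan cmult1 cmult2)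
      have e2: "(Q * P) $$ (j,j) = 1" using QP1 j by simp
      have "complex_of_real (\<Sum>i<d. (cmod (P $$ (i,j)))\<^sup>2) = 1" using e1 e2 by metis
      hence "(\<Sum>i<d. (cmod (P $$ (i,j)))\<^sup>2) = 1" by (simp only: of_real_eq_1_iff)
      thus "sqrt (\<Sum>i<d. (cmod (P $$ (i,j)))\<^sup>2) * \<sigma> j = \<sigma> j" by simp
    qed
    finally show ?thesis .
  qed
  show ?thesis using ms nn sq tr by blast
qed

lemma sum_split_mult: fixes n d :: nat shows "(\<Sum>p<n*d. f p) = (\<Sum>i<n. \<Sum>j<d. f (i*d+j))"
proof -
  have "(\<Sum>i<n. \<Sum>j<d. f (i*d+j)) = (\<Sum>i<n. sum f {i*d..<i*d+d})"
  proof (rule sum.cong[OF refl])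
    fix i assume "i \<in> {..<n}"
    have "sum f {0 + i*d..<d + i*d} = sum (\<lambda>j. f (j + i*d)) {0..<d}"
      by (rule sum.shift_bounds_nat_ivl)
    thus "(\<Sum>j<d. f (i*d+j)) = sum f {i*d..<i*d+d}" by (simp add: atLeast0LessThan add.commute)
  qed
  also have "\<dots> = (\<Sum>p<n*d. f p)" by (rule sum.nat_group)
  finally show ?thesis by simp
qed

lemma mtrace_Eunit: "i < d \<Longrightarrow> j < d \<Longrightarrow> mtrace (Eunit d i j) = (if i = j then 1 else 0)"
  unfolding mtrace_def Eunit_def by (auto simp: sum.delta)

lemma Phi_E_entry: assumes "a < d" "b < d" "x < d" "y < d"
  shows "Phi_t d t (Eunit d a b) $$ (x,y) = (if a = b \<and> x = y then 1 else 0) - of_real t * (if x = a \<and> y = b then 1 else 0)"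
  using assms unfolding Phi_t_def by (simp add: mtrace_Eunit, simp add: Eunit_def)

lemma choi_entry: assumes p: "p < d*d" and q: "q < d*d"
  shows "choi d (Phi_t d t) $$ (p,q) = (if p = q then 1 else 0)
      - complex_of_real t * (if p div d = p mod d \<and> q div d = q mod d then 1 else 0)"
proof -
  have d: "d > 0" using p by (cases d) auto
  have pd: "p div d < d" "q div d < d" using p q by (auto simp: less_mult_imp_div_less)
  have pm: "p mod d < d" "q mod d < d" using d by auto
  have eq: "(p div d = q div d \<and> p mod d = q mod d) = (p = q)"
    by (metis div_mult_mod_eq)
  have "choi d (Phi_t d t) $$ (p,q) = Phi_t d t (Eunit d (p div d) (q div d)) $$ (p mod d, q mod d)"
    unfolding choi_def using p q by simp
  also have "\<dots> = (if p div d = q div d \<and> p mod d = q mod d then 1 else 0)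
      - of_real t * (if p mod d = p div d \<and> q mod d = q div d then 1 else 0)"
    by (rule Phi_E_entry[OF pd pm])
  also have "\<dots> = (if p = q then 1 else 0)
      - complex_of_real t * (if p div d = p mod d \<and> q div d = q mod d then 1 else 0)"
    unfolding eq by (simp add: eq_commute)
  finally show ?thesis .
qed

lemma qform_expand: assumes C: "C \<in> carrier_mat N N" and v: "v \<in> carrier_vec N"
  shows "qform C v = (\<Sum>p<N. (\<Sum>q<N. C $$ (p,q) * v $ q) * cnj (v $ p))"
  using C v unfolding qform_def by (simp add: scalar_prod_def atLeast0LessThan)

lemma qform_phi: assumes psi: "\<psi> \<in> carrier_vec (d*d)"
  shows "qform (choi d (Phi_t d t)) \<psi> =
     of_real (\<Sum>p<d*d. (cmod (\<psi> $ p))\<^sup>2) - of_real (t * (cmod (mtrace (coeff_mat d \<psi>)))\<^sup>2)"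
proof -
  define D where "D p = (if p div d = p mod d then (1::complex) else 0)" for p
  define \<tau> where "\<tau> = (\<Sum>q<d*d. D q * \<psi> $ q)"
  have C: "choi d (Phi_t d t) \<in> carrier_mat (d*d) (d*d)" unfolding choi_def by simp
  have inner: "(\<Sum>q<d*d. choi d (Phi_t d t) $$ (p,q) * \<psi> $ q) = \<psi> $ p - of_real t * D p * \<tau>"
    if p: "p < d*d" for p
  proof -
    have "(\<Sum>q<d*d. choi d (Phi_t d t) $$ (p,q) * \<psi> $ q)
       = (\<Sum>q<d*d. (if p = q then \<psi> $ q else 0) - of_real t * D p * (D q * \<psi> $ q))"
      by (intro sum.cong refl, subst choi_entry[OF p], simp, simp add: D_def algebra_simps)
    also have "\<dots> = \<psi> $ p - of_real t * D p * \<tau>"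
      unfolding \<tau>_def using p by (simp add: sum_subtractf sum_distrib_left)
    finally show ?thesis .
  qed
  have "qform (choi d (Phi_t d t)) \<psi> = (\<Sum>p<d*d. (\<psi> $ p - of_real t * D p * \<tau>) * cnj (\<psi> $ p))"
    unfolding qform_expand[OF C psi] by (intro sum.cong refl) (simp add: inner)
  also have "\<dots> = (\<Sum>p<d*d. \<psi> $ p * cnj (\<psi> $ p)) - of_real t * \<tau> * (\<Sum>p<d*d. D p * cnj (\<psi> $ p))"
    by (simp add: algebra_simps sum_subtractf sum_distrib_left)
  also have "(\<Sum>p<d*d. D p * cnj (\<psi> $ p)) = cnj \<tau>"
    unfolding \<tau>_def cnj_sum by (intro sum.cong refl) (simp add: D_def)
  also have "\<tau> = mtrace (coeff_mat d \<psi>)"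
  proof -
    have "\<tau> = (\<Sum>i<d. \<Sum>j<d. D (i*d+j) * \<psi> $ (i*d+j))" unfolding \<tau>_def by (rule sum_split_mult)
    also have "\<dots> = (\<Sum>i<d. \<psi> $ (i*d+i))"
    proof (intro sum.cong refl)
      fix i assume i: "i \<in> {..<d}"
      have "(\<Sum>j<d. D (i*d+j) * \<psi> $ (i*d+j)) = (\<Sum>j<d. if j = i then \<psi> $ (i*d+j) else 0)"
        by (intro sum.cong refl) (auto simp: D_def)
      thus "(\<Sum>j<d. D (i*d+j) * \<psi> $ (i*d+j)) = \<psi> $ (i*d+i)" using i by (simp add: sum.delta)
    qed
    also have "\<dots> = mtrace (coeff_mat d \<psi>)" unfolding mtrace_def coeff_mat_def by simp
    finally show ?thesis .
  qed
  finally show ?thesis by (simp add: cmult1)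
qed

lemma herm_pres: "hermitian_preserving d (Phi_t d t)"
  unfolding hermitian_preserving_def
proof (intro ballI impI)
  fix X assume X: "X \<in> carrier_mat d d" and h: "adj X = X"
  have Xe: "cnj (X $$ (j,i)) = X $$ (i,j)" if "i < d" "j < d" for i j
    using arg_cong[OF h, of "\<lambda>M. M $$ (i,j)"] that X by auto
  have tr: "cnj (mtrace X) = mtrace X" unfolding mtrace_def using X Xe by (simp add: cnj_sum)
  have PX: "Phi_t d t X \<in> carrier_mat d d" unfolding Phi_t_def using X by (intro minus_carrier_mat) simp
  have ent: "Phi_t d t X $$ (i,j) = mtrace X * (if i = j then 1 else 0) - of_real t * X $$ (i,j)"
    if "i < d" "j < d" for i j unfolding Phi_t_def using X that by simp
  have "adj (Phi_t d t X) = Phi_t d t X"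
  proof (rule eq_matI)
    fix i j assume i: "i < dim_row (Phi_t d t X)" and j: "j < dim_col (Phi_t d t X)"
    hence i': "i < d" and j': "j < d" using PX by auto
    have "adj (Phi_t d t X) $$ (i,j) = cnj (Phi_t d t X $$ (j,i))" using i' j' PX by simp
    also have "\<dots> = cnj (mtrace X) * (if i = j then 1 else 0) - of_real t * cnj (X $$ (j,i))"
      using ent[OF j' i'] by auto
    also have "\<dots> = Phi_t d t X $$ (i,j)" using ent[OF i' j'] tr Xe[OF i' j'] by simp
    finally show "adj (Phi_t d t X) $$ (i,j) = Phi_t d t X $$ (i,j)" .
  qed (insert PX, auto)
  thus "Phi_t d t X \<in> carrier_mat d d \<and> adj (Phi_t d t X) = Phi_t d t X" using PX by simp
qed

lemma unit_qform: assumes "unit_vec_dd d \<psi>"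
  shows "qform (choi d (Phi_t d t)) \<psi> = of_real (1 - t * (cmod (mtrace (coeff_mat d \<psi>)))\<^sup>2)"
  using assms unfolding unit_vec_dd_def by (simp add: qform_phi)

lemma inP_iff: "in_P d \<alpha> (Phi_t d t) \<longleftrightarrow>
   (\<forall>\<psi> \<in> V_alpha d \<alpha>. t * (cmod (mtrace (coeff_mat d \<psi>)))\<^sup>2 \<le> 1)"
proof -
  have u: "unit_vec_dd d \<psi>" if "\<psi> \<in> V_alpha d \<alpha>" for \<psi>
    using that unfolding V_alpha_def admissible_def Let_def by auto
  show ?thesis unfolding in_P_def using herm_pres u unit_qform by auto
qed

lemma key_ineq: fixes k \<theta> S x :: real
  assumes k: "k \<ge> 1" and th: "0 < \<theta>" "\<theta> < 1" and S: "S \<ge> 0" and x: "0 \<le> x" "x \<le> \<theta> * S / k"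
  shows "(S+x)\<^sup>2 * (k+\<theta>\<^sup>2) \<le> (k+\<theta>)\<^sup>2 * (S\<^sup>2/k + x\<^sup>2)"
proof -
  have id: "(k+\<theta>)\<^sup>2 * (S\<^sup>2 + k*x\<^sup>2) - k*(k+\<theta>\<^sup>2)*(S+x)\<^sup>2
      = (k*x - \<theta>*S) * (k*(k+2*\<theta>-1)*x - (2*k+\<theta>-k*\<theta>)*S)"
    by (simp add: power2_eq_square algebra_simps)
  have x': "k * x \<le> \<theta> * S" using x k by (simp add: field_simps)
  have f1: "k*x - \<theta>*S \<le> 0" using x' by simp
  have c0: "k+2*\<theta>-1 \<ge> 0" using k th by simp
  have "(k+2*\<theta>-1) * (k * x) \<le> (k+2*\<theta>-1) * (\<theta> * S)"
    by (rule mult_left_mono[OF x' c0])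
  hence l1: "k*(k+2*\<theta>-1)*x \<le> (k+2*\<theta>-1) * \<theta> * S" by (simp add: mult.commute mult.left_commute mult.assoc)
  have id2: "(2*k+\<theta>-k*\<theta>) - (k+2*\<theta>-1) * \<theta> = 2*(k+\<theta>)*(1-\<theta>)" by (simp add: algebra_simps)
  have "2*(k+\<theta>)*(1-\<theta>) \<ge> 0" using k th by simp
  hence "(k+2*\<theta>-1) * \<theta> \<le> (2*k+\<theta>-k*\<theta>)" using id2 by linarith
  hence l2: "(k+2*\<theta>-1) * \<theta> * S \<le> (2*k+\<theta>-k*\<theta>)*S" using S by (rule mult_right_mono)
  have f2: "k*(k+2*\<theta>-1)*x - (2*k+\<theta>-k*\<theta>)*S \<le> 0" using l1 l2 by linarith
  have "0 \<le> (k+\<theta>)\<^sup>2 * (S\<^sup>2 + k*x\<^sup>2) - k*(k+\<theta>\<^sup>2)*(S+x)\<^sup>2"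
    unfolding id using f1 f2 by (rule mult_nonpos_nonpos)
  hence m: "k*((S+x)\<^sup>2 * (k+\<theta>\<^sup>2)) \<le> (k+\<theta>)\<^sup>2 * (S\<^sup>2 + k*x\<^sup>2)"
    by (simp add: mult.commute mult.left_commute)
  have e: "(k+\<theta>)\<^sup>2 * (S\<^sup>2 + k*x\<^sup>2) = k * ((k+\<theta>)\<^sup>2 * (S\<^sup>2/k + x\<^sup>2))"
    using k by (simp add: field_simps)
  show ?thesis using m unfolding e using k by simp
qed

lemma sum_split_at: fixes g :: "nat \<Rightarrow> real" shows "m \<le> d \<Longrightarrow> sum g {..<d} = sum g {..<m} + sum g {m..<d}"
  by (metis atLeast0LessThan sum.atLeastLessThan_concat zero_le)

lemma bound_f:
  fixes \<alpha> :: real and d :: nat and f :: "nat \<Rightarrow> real"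
  assumes \<alpha>: "1 \<le> \<alpha>" "\<alpha> \<le> real d"
  and nn: "\<forall>j<d. f j \<ge> 0"
  and sq: "(\<Sum>j<d. (f j)\<^sup>2) = 1"
  and zero: "\<forall>j. nat \<lceil>\<alpha>\<rceil> \<le> j \<and> j < d \<longrightarrow> f j = 0"
  and th: "\<alpha> - real (nat \<lfloor>\<alpha>\<rfloor>) > 0 \<longrightarrow>
      f (nat \<lfloor>\<alpha>\<rfloor>) \<le> (\<alpha> - real (nat \<lfloor>\<alpha>\<rfloor>)) / real (nat \<lfloor>\<alpha>\<rfloor>) * (\<Sum>j<nat \<lfloor>\<alpha>\<rfloor>. f j)"
  shows "(\<Sum>j<d. f j)\<^sup>2 * tstar \<alpha> \<le> 1"
proof -
  define k where "k = nat \<lfloor>\<alpha>\<rfloor>"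
  define \<theta> where "\<theta> = \<alpha> - real k"
  have kf: "real k = real_of_int \<lfloor>\<alpha>\<rfloor>" unfolding k_def using \<alpha> by simp
  have k1: "k \<ge> 1" unfolding k_def using \<alpha> by linarith
  have kd: "k \<le> d" unfolding k_def using \<alpha> by linarith
  have th0: "0 \<le> \<theta>" "\<theta> < 1" unfolding \<theta>_def using kf by linarith+
  have ts: "tstar \<alpha> = (k + \<theta>\<^sup>2) / (k + \<theta>)\<^sup>2" unfolding tstar_def Let_def \<theta>_def kf by simp
  have Sk: "(\<Sum>j<k. (f j)\<^sup>2) \<le> 1"
  proof -
    have "(\<Sum>j<k. (f j)\<^sup>2) \<le> (\<Sum>j<k. (f j)\<^sup>2) + (\<Sum>j\<in>{k..<d}. (f j)\<^sup>2)"
      by (simp add: sum_nonneg)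
    also have "\<dots> = 1" using sum_split_at[OF kd, of "\<lambda>j. (f j)\<^sup>2"] sq by simp
    finally show ?thesis .
  qed
  have cs: "(\<Sum>j<k. f j)\<^sup>2 \<le> real k * (\<Sum>j<k. (f j)\<^sup>2)"
    using cs_real[of "{..<k}" f "\<lambda>_. 1"] by (simp add: mult.commute)
  have Snn: "(\<Sum>j<k. f j) \<ge> 0" using nn kd by (intro sum_nonneg) auto
  show ?thesis
  proof (cases "\<theta> = 0")
    case True
    hence ak: "\<alpha> = real k" unfolding \<theta>_def by simp
    hence ck: "nat \<lceil>\<alpha>\<rceil> = k" by simp
    have "(\<Sum>j<d. f j) = (\<Sum>j<k. f j)"
      using sum_split_at[OF kd, of f] zero ck by simp
    hence le: "(\<Sum>j<d. f j)\<^sup>2 \<le> real k" using cs Sk k1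
      by (metis mult_left_le of_nat_0_le_iff order_trans)
    have ts1: "tstar \<alpha> = 1 / real k" using ts True k1 by (simp add: power2_eq_square)
    have "(\<Sum>j<d. f j)\<^sup>2 / real k \<le> real k / real k" using divide_right_mono[OF le, of "real k"] by simp
    thus ?thesis unfolding ts1 using k1 by simp
  next
    case False
    hence thp: "\<theta> > 0" using th0 by simp
    have ae: "\<alpha> = real k + \<theta>" unfolding \<theta>_def by simp
    have "\<lceil>\<alpha>\<rceil> = int k + 1" unfolding ae using thp th0 by (simp add: ceiling_eq_iff)
    hence ck: "nat \<lceil>\<alpha>\<rceil> = k + 1" by simp
    have kd1: "k + 1 \<le> d" using \<alpha> ae thp by linarith
    define S where "S = (\<Sum>j<k. f j)"
    define x where "x = f k"
    have sumd: "(\<Sum>j<d. f j) = S + x"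
      using sum_split_at[OF kd1, of f] zero ck unfolding S_def x_def by simp
    have sqd: "(\<Sum>j<k. (f j)\<^sup>2) + x\<^sup>2 \<le> 1"
    proof -
      have "(\<Sum>j<k. (f j)\<^sup>2) + x\<^sup>2 \<le> (\<Sum>j<Suc k. (f j)\<^sup>2) + (\<Sum>j\<in>{Suc k..<d}. (f j)\<^sup>2)"
        unfolding x_def by (simp add: sum_nonneg)
      also have "\<dots> = 1" using sum_split_at[of "Suc k" d "\<lambda>j. (f j)\<^sup>2"] kd1 sq by simp
      finally show ?thesis .
    qed
    have S2: "S\<^sup>2 / real k \<le> (\<Sum>j<k. (f j)\<^sup>2)" using cs k1 unfolding S_def by (simp add: field_simps)
    have x0: "0 \<le> x" unfolding x_def using nn kd1 by simp
    have xb: "x \<le> \<theta> * S / real k" using th thp unfolding x_def S_def k_def[symmetric] \<theta>_def[symmetric]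
      by (simp add: \<theta>_def)
    have "(S+x)\<^sup>2 * (real k+\<theta>\<^sup>2) \<le> (real k+\<theta>)\<^sup>2 * (S\<^sup>2/real k + x\<^sup>2)"
      by (rule key_ineq) (use k1 thp th0 Snn x0 xb in \<open>auto simp: S_def\<close>)
    also have "\<dots> \<le> (real k+\<theta>)\<^sup>2 * 1" using S2 sqd by (intro mult_left_mono) auto
    finally have "(S+x)\<^sup>2 * (real k+\<theta>\<^sup>2) \<le> (real k+\<theta>)\<^sup>2" by simp
    moreover have "(real k+\<theta>)\<^sup>2 > 0" using k1 thp by simp
    ultimately show ?thesis unfolding sumd ts by (simp add: field_simps)
  qed
qed

lemma mset_sum_list_map: fixes g :: "'a \<Rightarrow> real"
  shows "mset xs = mset ys \<Longrightarrow> sum_list (map g xs) = sum_list (map g ys)"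
proof -
  assume h: "mset xs = mset ys"
  have "sum_list (map g xs) = sum_mset (mset (map g xs))" by (rule sum_mset_sum_list[symmetric])
  also have "\<dots> = sum_mset (mset (map g ys))" by (simp only: mset_map h)
  also have "\<dots> = sum_list (map g ys)" by (rule sum_mset_sum_list)
  finally show ?thesis .
qed

lemma sum_list_nth: "sum_list (map g xs) = (\<Sum>j<length xs. g (xs ! j))"
  by (simp add: sum_list_sum_nth atLeast0LessThan)

lemma tstar_nonneg: assumes "1 \<le> \<alpha>" shows "tstar \<alpha> \<ge> 0"
proof -
  have "(1::int) \<le> \<lfloor>\<alpha>\<rfloor>" using assms by (simp add: le_floor_iff)
  hence "real_of_int \<lfloor>\<alpha>\<rfloor> \<ge> 1" by simp
  thus ?thesis unfolding tstar_def Let_def by (simp add: add_nonneg_nonneg)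
qed

lemma frob_coeff: assumes "\<psi> \<in> carrier_vec (d*d)"
  shows "(\<Sum>j<d. \<Sum>i<d. (cmod (coeff_mat d \<psi> $$ (i,j)))\<^sup>2) = (\<Sum>p<d*d. (cmod (\<psi> $ p))\<^sup>2)"
proof -
  have "(\<Sum>j<d. \<Sum>i<d. (cmod (coeff_mat d \<psi> $$ (i,j)))\<^sup>2) = (\<Sum>i<d. \<Sum>j<d. (cmod (coeff_mat d \<psi> $$ (i,j)))\<^sup>2)"
    by (rule sum.swap)
  also have "\<dots> = (\<Sum>i<d. \<Sum>j<d. (cmod (\<psi> $ (i*d+j)))\<^sup>2)"
    unfolding coeff_mat_def by simp
  also have "\<dots> = (\<Sum>p<d*d. (cmod (\<psi> $ p))\<^sup>2)" by (rule sum_split_mult[symmetric])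
  finally show ?thesis .
qed

lemma adm_bound: assumes \<alpha>: "1 \<le> \<alpha>" "\<alpha> \<le> real d" and adm: "admissible d \<alpha> \<psi>"
  shows "(cmod (mtrace (coeff_mat d \<psi>)))\<^sup>2 * tstar \<alpha> \<le> 1"
proof -
  define k where "k = nat \<lfloor>\<alpha>\<rfloor>"
  define r where "r = nat \<lceil>\<alpha>\<rceil>"
  define \<theta> where "\<theta> = \<alpha> - real k"
  from adm have unit: "unit_vec_dd d \<psi>"
    and zeros: "\<forall>j. r + 1 \<le> j \<and> j \<le> d \<longrightarrow> schmidt d \<psi> j = 0"
    and thc: "\<theta> > 0 \<longrightarrow> schmidt d \<psi> (k+1) \<le> \<theta> / real k * (\<Sum>j=1..k. schmidt d \<psi> j)"
    unfolding admissible_def Let_def k_def r_def \<theta>_def by auto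
  from unit have psi: "\<psi> \<in> carrier_vec (d*d)" and n1: "(\<Sum>p<d*d. (cmod (\<psi> $ p))\<^sup>2) = 1"
    unfolding unit_vec_dd_def by auto
  define A where "A = coeff_mat d \<psi>"
  have A: "A \<in> carrier_mat d d" unfolding A_def coeff_mat_def by simp
  obtain \<sigma> where ms: "mset (singular_values A) = mset (map \<sigma> [0..<d])" and nn: "\<forall>j. \<sigma> j \<ge> 0"
    and sq: "(\<Sum>j<d. (\<sigma> j)\<^sup>2) = (\<Sum>j<d. \<Sum>i<d. (cmod (A $$ (i,j)))\<^sup>2)"
    and tr: "cmod (mtrace A) \<le> (\<Sum>j<d. \<sigma> j)"
    using sv_main[OF A] by blast
  define sv where "sv = singular_values A"
  define f where "f j = sv ! j" for j
  have len: "length sv = d" unfolding sv_def using arg_cong[OF ms, of size] by simp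
  have setsv: "set sv = \<sigma> ` {0..<d}" unfolding sv_def using arg_cong[OF ms, of set_mset] by simp
  have fnn: "\<forall>j<d. f j \<ge> 0" unfolding f_def using len setsv nn by (metis imageE nth_mem)
  have sumg: "(\<Sum>j<d. g (f j)) = (\<Sum>j<d. g (\<sigma> j))" for g :: "real \<Rightarrow> real"
  proof -
    have "(\<Sum>j<d. g (f j)) = sum_list (map g sv)" unfolding f_def sum_list_nth len ..
    also have "\<dots> = sum_list (map g (map \<sigma> [0..<d]))"
      by (rule mset_sum_list_map) (use ms sv_def in simp)
    also have "\<dots> = (\<Sum>j<d. g (\<sigma> j))" by (simp add: sum_list_nth)
    finally show ?thesis .
  qed
  have sqf: "(\<Sum>j<d. (f j)\<^sup>2) = 1"
    using sumg[of "\<lambda>x. x\<^sup>2"] sq frob_coeff[OF psi] n1 unfolding A_def by simp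
  have sumf: "(\<Sum>j<d. f j) = (\<Sum>j<d. \<sigma> j)" using sumg[of "\<lambda>x. x"] by simp
  have sch: "schmidt d \<psi> j = f (j - 1)" for j unfolding schmidt_def f_def sv_def A_def ..
  have zf: "\<forall>j. nat \<lceil>\<alpha>\<rceil> \<le> j \<and> j < d \<longrightarrow> f j = 0"
  proof (intro allI impI)
    fix j assume "nat \<lceil>\<alpha>\<rceil> \<le> j \<and> j < d"
    hence "r + 1 \<le> j + 1 \<and> j + 1 \<le> d" unfolding r_def by auto
    thus "f j = 0" using zeros sch[of "j+1"] by auto
  qed
  have thf: "\<alpha> - real (nat \<lfloor>\<alpha>\<rfloor>) > 0 \<longrightarrow>
      f (nat \<lfloor>\<alpha>\<rfloor>) \<le> (\<alpha> - real (nat \<lfloor>\<alpha>\<rfloor>)) / real (nat \<lfloor>\<alpha>\<rfloor>) * (\<Sum>j<nat \<lfloor>\<alpha>\<rfloor>. f j)"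
  proof -
    have "(\<Sum>j=1..k. schmidt d \<psi> j) = (\<Sum>j<k. f j)"
      unfolding sch by (simp add: sum.atLeast1_atMost_eq)
    thus ?thesis using thc sch[of "k+1"] unfolding k_def[symmetric] \<theta>_def[symmetric] by simp
  qed
  have b: "(\<Sum>j<d. f j)\<^sup>2 * tstar \<alpha> \<le> 1" by (rule bound_f[OF \<alpha> fnn sqf zf thf])
  have "(cmod (mtrace A))\<^sup>2 \<le> (\<Sum>j<d. f j)\<^sup>2" unfolding sumf using tr by (simp add: power_mono)
  hence "(cmod (mtrace A))\<^sup>2 * tstar \<alpha> \<le> (\<Sum>j<d. f j)\<^sup>2 * tstar \<alpha>"
    using tstar_nonneg[OF \<alpha>(1)] by (rule mult_right_mono)
  thus ?thesis using b unfolding A_def by simp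
qed

lemma divmod_lt: fixes i j d :: nat assumes "j < d" shows "(i*d+j) div d = i" "(i*d+j) mod d = j"
  using assms by auto

lemma idx_lt: fixes i j d :: nat assumes "i < d" "j < d" shows "i*d+j < d*d"
proof -
  have "i*d+j < i*d + d" using assms by simp
  also have "\<dots> = (i+1)*d" by simp
  also have "\<dots> \<le> d*d" using assms by (intro mult_right_mono) auto
  finally show ?thesis .
qed

lemma gsum: fixes h :: "real \<Rightarrow> real" and k d :: nat
  assumes kd: "k \<le> d" and h0: "h 0 = 0"
  shows "(\<Sum>i<d. h (if i < k then 1 else if i = k then \<theta> else 0)) = real k * h 1 + (if k < d then h \<theta> else 0)"
proof -
  let ?g = "\<lambda>i. h (if i < k then 1 else if i = k then \<theta> else 0)"
  have "(\<Sum>i<d. ?g i) = (\<Sum>i<k. ?g i) + (\<Sum>i\<in>{k..<d}. ?g i)" by (rule sum_split_at[OF kd])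
  also have "(\<Sum>i<k. ?g i) = (\<Sum>i<k. h 1)" by (intro sum.cong) auto
  also have "(\<Sum>i\<in>{k..<d}. ?g i) = (\<Sum>i\<in>{k..<d}. if i = k then h \<theta> else 0)"
    by (intro sum.cong) (auto simp: h0)
  also have "\<dots> = (if k < d then h \<theta> else 0)" by (simp add: sum.delta)
  finally show ?thesis by simp
qed

lemma witness: assumes \<alpha>: "1 \<le> \<alpha>" "\<alpha> \<le> real d"
  shows "\<exists>\<psi>. \<psi> \<in> V_alpha d \<alpha> \<and> (cmod (mtrace (coeff_mat d \<psi>)))\<^sup>2 * tstar \<alpha> = 1"
proof -
  define k where "k = nat \<lfloor>\<alpha>\<rfloor>"
  define r where "r = nat \<lceil>\<alpha>\<rceil>"
  define \<theta> where "\<theta> = \<alpha> - real k"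
  have kf: "real k = real_of_int \<lfloor>\<alpha>\<rfloor>" unfolding k_def using \<alpha> by simp
  have k1: "k \<ge> 1" unfolding k_def using \<alpha> by linarith
  have kd: "k \<le> d" unfolding k_def using \<alpha> by linarith
  have th0: "0 \<le> \<theta>" "\<theta> < 1" unfolding \<theta>_def using kf by linarith+
  have ae: "\<alpha> = real k + \<theta>" unfolding \<theta>_def by simp
  have rk: "r \<ge> k" unfolding r_def k_def by (simp add: floor_le_ceiling nat_mono)
  have rk1: "\<theta> > 0 \<Longrightarrow> r = k + 1"
  proof -
    assume thp: "\<theta> > 0"
    have "\<lceil>\<alpha>\<rceil> = int k + 1" unfolding ae using thp th0 by (simp add: ceiling_eq_iff)
    thus "r = k + 1" unfolding r_def by simp
  qed
  have kd1: "\<theta> > 0 \<Longrightarrow> k < d" using \<alpha> ae by linarith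
  have thk: "(if k < d then \<theta> else 0) = \<theta>" using kd1 th0 by force
  have thk2: "(if k < d then \<theta>\<^sup>2 else 0) = \<theta>\<^sup>2" using thk by (cases "k < d") auto
  define N where "N = sqrt (real k + \<theta>\<^sup>2)"
  have Npos: "N > 0" unfolding N_def using k1 by (simp add: add_pos_nonneg)
  have N2: "N\<^sup>2 = real k + \<theta>\<^sup>2" unfolding N_def using k1 by (simp add: add_nonneg_nonneg)
  define g where "g i = (if i < k then 1 else if i = k then \<theta> else 0)" for i
  define c where "c i = g i / N" for i
  have cnn: "c i \<ge> 0" for i unfolding c_def g_def using Npos th0 by auto
  have sumc: "(\<Sum>i<d. c i) = (real k + \<theta>) / N"
  proof -
    have "(\<Sum>i<d. c i) = (\<Sum>i<d. g i) / N" unfolding c_def by (simp add: sum_divide_distrib)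
    also have "(\<Sum>i<d. g i) = real k + \<theta>"
      using gsum[OF kd, of "\<lambda>x. x" \<theta>] thk unfolding g_def by simp
    finally show ?thesis .
  qed
  have sumc2: "(\<Sum>i<d. (c i)\<^sup>2) = 1"
  proof -
    have "(\<Sum>i<d. (c i)\<^sup>2) = (\<Sum>i<d. (g i)\<^sup>2) / N\<^sup>2" unfolding c_def
      by (simp add: sum_divide_distrib power_divide)
    also have "(\<Sum>i<d. (g i)\<^sup>2) = real k + \<theta>\<^sup>2"
      using gsum[OF kd, of "\<lambda>x. x\<^sup>2" \<theta>] thk2 unfolding g_def by simp
    moreover have "real k + \<theta>\<^sup>2 > 0" using k1 by (simp add: add_pos_nonneg)
    ultimately show ?thesis using N2 by simp
  qed
  define \<psi> where "\<psi> = vec (d*d) (\<lambda>p. if p div d = p mod d then complex_of_real (c (p div d)) else 0)"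
  have psi: "\<psi> \<in> carrier_vec (d*d)" unfolding \<psi>_def by simp
  define A where "A = mat d d (\<lambda>(i,j). if i = j then complex_of_real (c i) else 0)"
  have coeff: "coeff_mat d \<psi> = A"
    unfolding coeff_mat_def A_def \<psi>_def by (rule eq_matI) (auto simp: idx_lt divmod_lt)
  have unit: "(\<Sum>p<d*d. (cmod (\<psi> $ p))\<^sup>2) = 1"
  proof -
    have "(\<Sum>p<d*d. (cmod (\<psi> $ p))\<^sup>2) = (\<Sum>j<d. \<Sum>i<d. (cmod (coeff_mat d \<psi> $$ (i,j)))\<^sup>2)"
      by (rule frob_coeff[OF psi, symmetric])
    also have "\<dots> = (\<Sum>j<d. \<Sum>i<d. if i = j then (c j)\<^sup>2 else 0)"
      unfolding coeff A_def by (intro sum.cong refl) (auto simp: cnn)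
    also have "\<dots> = (\<Sum>j<d. (c j)\<^sup>2)" by (simp add: sum.delta)
    finally show ?thesis using sumc2 by simp
  qed
  have trA: "mtrace A = complex_of_real ((real k + \<theta>) / N)"
  proof -
    have "mtrace A = (\<Sum>i<d. complex_of_real (c i))" unfolding mtrace_def A_def by simp
    also have "\<dots> = complex_of_real (\<Sum>i<d. c i)" by (simp only: of_real_sum)
    finally show ?thesis unfolding sumc .
  qed
  have H: "adj A * A = mat d d (\<lambda>(i,j). if i = j then complex_of_real ((c i)\<^sup>2) else 0)"
  proof (rule eq_matI)
    fix i j assume i: "i < dim_row (mat d d (\<lambda>(i,j). if i = j then complex_of_real ((c i)\<^sup>2) else 0))"
      and j: "j < dim_col (mat d d (\<lambda>(i,j). if i = j then complex_of_real ((c i)\<^sup>2) else 0))"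
    hence i': "i < d" and j': "j < d" by auto
    have "(adj A * A) $$ (i,j) = (\<Sum>l<d. cnj (A $$ (l,i)) * A $$ (l,j))"
      using i' j' unfolding A_def by (simp add: scalar_prod_def atLeast0LessThan)
    also have "\<dots> = (\<Sum>l<d. if l = i then (if i = j then complex_of_real ((c i)\<^sup>2) else 0) else 0)"
      using i' j' unfolding A_def by (intro sum.cong refl) (auto simp: power2_eq_square)
    also have "\<dots> = (if i = j then complex_of_real ((c i)\<^sup>2) else 0)" using i' by (simp add: sum.delta)
    finally show "(adj A * A) $$ (i,j) = mat d d (\<lambda>(i,j). if i = j then complex_of_real ((c i)\<^sup>2) else 0) $$ (i,j)"
      using i' j' by simp
  qed (auto simp: A_def)
  define L where "L = map c [0..<d]"
  have svA: "singular_values A = L"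
  proof -
    let ?H = "mat d d (\<lambda>(i,j). if i = j then complex_of_real ((c i)\<^sup>2) else 0)"
    have Hc: "?H \<in> carrier_mat d d" by simp
    have ut: "upper_triangular ?H" unfolding upper_triangular_def by auto
    have "char_poly ?H = (\<Prod>a\<leftarrow>diag_mat ?H. [:- a, 1:])" by (rule char_poly_upper_triangular[OF Hc ut])
    hence pr: "proots (char_poly ?H) = mset (diag_mat ?H)" by (simp add: proots_linear_prod)
    have dg: "diag_mat ?H = map (\<lambda>i. complex_of_real ((c i)\<^sup>2)) [0..<d]" unfolding diag_mat_def by simp
    have ms: "image_mset (\<lambda>z. sqrt (Re z)) (proots (char_poly (adj A * A))) = mset L"
      unfolding H pr dg L_def by (simp add: multiset.map_comp comp_def cnn)
    have srt: "sorted (rev L)"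
      unfolding sorted_rev_iff_nth_mono
    proof (intro allI impI)
      fix i j assume ij: "i \<le> j" and j: "j < length L"
      hence jd: "j < d" unfolding L_def by simp
      have "c j \<le> c i" unfolding c_def using ij th0 Npos
        by (intro divide_right_mono) (auto simp: g_def)
      thus "L ! j \<le> L ! i" unfolding L_def using jd ij by simp
    qed
    have "sort L = rev L" by (rule properties_for_sort) (simp_all add: srt)
    thus ?thesis unfolding singular_values_def ms by simp
  qed
  have sch: "schmidt d \<psi> j = c (j - 1)" if "1 \<le> j" "j \<le> d" for j
    unfolding schmidt_def coeff svA L_def using that by simp
  have adm: "admissible d \<alpha> \<psi>"
    unfolding admissible_def Let_def k_def[symmetric] r_def[symmetric] \<theta>_def[symmetric]
  proof (intro conjI allI impI)
    show "unit_vec_dd d \<psi>" unfolding unit_vec_dd_def using psi unit by simp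
  next
    fix j assume j: "r + 1 \<le> j \<and> j \<le> d"
    have "g (j - 1) = 0"
    proof (cases "\<theta> > 0")
      case True thus ?thesis using rk1[OF True] j unfolding g_def by auto
    next
      case False thus ?thesis using rk j th0 unfolding g_def by auto
    qed
    thus "schmidt d \<psi> j = 0" using sch[of j] j unfolding c_def by simp
  next
    assume thp: "0 < \<theta>"
    have "(\<Sum>j=1..k. schmidt d \<psi> j) = (\<Sum>j=1..k. c (j - 1))" using kd by (intro sum.cong) (auto simp: sch)
    also have "\<dots> = (\<Sum>j<k. c j)" by (simp add: sum.atLeast1_atMost_eq)
    also have "\<dots> = (\<Sum>j<k. 1 / N)" unfolding c_def g_def by (intro sum.cong) auto
    finally have s: "(\<Sum>j=1..k. schmidt d \<psi> j) = real k / N" by simp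
    have "schmidt d \<psi> (k+1) = \<theta> / N" using sch[of "k+1"] kd1[OF thp] unfolding c_def g_def by simp
    thus "schmidt d \<psi> (k + 1) \<le> \<theta> / real k * (\<Sum>j = 1..k. schmidt d \<psi> j)" unfolding s using k1 by simp
  qed
  have "(cmod (mtrace (coeff_mat d \<psi>)))\<^sup>2 * tstar \<alpha> = 1"
  proof -
    have ts: "tstar \<alpha> = (real k + \<theta>\<^sup>2) / (real k + \<theta>)\<^sup>2" unfolding tstar_def Let_def \<theta>_def kf by simp
    have "(cmod (mtrace (coeff_mat d \<psi>)))\<^sup>2 = (real k + \<theta>)\<^sup>2 / N\<^sup>2"
    proof -
      have "cmod (complex_of_real ((real k + \<theta>) / N)) = \<bar>(real k + \<theta>) / N\<bar>" by (rule norm_of_real)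
      also have "\<dots> = (real k + \<theta>) / N" using Npos th0 by simp
      finally show ?thesis unfolding coeff trA by (simp add: power_divide)
    qed
    moreover have p1: "real k + \<theta>\<^sup>2 > 0" using k1 by (simp add: add_pos_nonneg)
    moreover have p2: "(real k + \<theta>)\<^sup>2 > 0" using k1 th0 by simp
    ultimately show ?thesis unfolding ts N2 by simp
  qed
  thus ?thesis using adm unfolding V_alpha_def by blast
qed

definition Bf :: "complex mat \<Rightarrow> nat \<Rightarrow> (nat \<Rightarrow> complex) \<Rightarrow> (nat \<Rightarrow> complex) \<Rightarrow> complex" where
  "Bf X N x y = (\<Sum>p<N. \<Sum>q<N. X $$ (p,q) * y q * cnj (x p))"

lemma qform_Bf: assumes "X \<in> carrier_mat N N" "v \<in> carrier_vec N"
  shows "qform X v = Bf X N (\<lambda>p. v $ p) (\<lambda>p. v $ p)"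
  unfolding qform_expand[OF assms] Bf_def by (simp add: sum_distrib_right)

lemma psd_Bf: assumes "psd N X"
  shows "Im (Bf X N x x) = 0" "Re (Bf X N x x) \<ge> 0"
proof -
  have X: "X \<in> carrier_mat N N" using assms unfolding psd_def by auto
  have v: "vec N x \<in> carrier_vec N" by simp
  have "Bf X N x x = qform X (vec N x)" unfolding qform_Bf[OF X v] Bf_def by (intro sum.cong refl) simp
  thus "Im (Bf X N x x) = 0" "Re (Bf X N x x) \<ge> 0" using assms v unfolding psd_def by auto
qed

lemma Bf_diff: "Bf X N (\<lambda>p. x p - y p) (\<lambda>p. x p - y p) = Bf X N x x + Bf X N y y - Bf X N x y - Bf X N y x"
  unfolding Bf_def by (simp add: algebra_simps sum.distrib sum_subtractf)

lemma Bf_sum_right: "Bf X N x (\<lambda>q. \<Sum>m\<in>M. w m q) = (\<Sum>m\<in>M. Bf X N x (w m))"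
  unfolding Bf_def
  by (simp add: sum_distrib_left sum_distrib_right, subst sum.swap, rule sum.cong[OF refl], subst sum.swap, simp add: mult.assoc mult.left_commute)

lemma Bf_sum_left: "Bf X N (\<lambda>p. \<Sum>l\<in>L. w l p) y = (\<Sum>l\<in>L. Bf X N (w l) y)"
  unfolding Bf_def
  by (simp add: cnj_sum sum_distrib_left sum_distrib_right, subst sum.swap, rule sum.cong[OF refl], subst sum.swap, simp add: mult.assoc mult.left_commute)

lemma Bf_convex: assumes psd: "psd N X"
  shows "Re (Bf X N (\<lambda>p. \<Sum>l<d. w l p) (\<lambda>p. \<Sum>l<d. w l p)) \<le> real d * (\<Sum>l<d. Re (Bf X N (w l) (w l)))"
proof -
  have "0 \<le> (\<Sum>l<d. \<Sum>m<d. Re (Bf X N (\<lambda>p. w l p - w m p) (\<lambda>p. w l p - w m p)))"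
    using psd_Bf(2)[OF psd] by (intro sum_nonneg) auto
  also have "\<dots> = (\<Sum>l<d. \<Sum>m<d. Re (Bf X N (w l) (w l)) + Re (Bf X N (w m) (w m))
       - Re (Bf X N (w l) (w m)) - Re (Bf X N (w m) (w l)))"
    unfolding Bf_diff by simp
  also have "\<dots> = 2 * (real d * (\<Sum>l<d. Re (Bf X N (w l) (w l))))
      - 2 * Re (Bf X N (\<lambda>p. \<Sum>l<d. w l p) (\<lambda>p. \<Sum>l<d. w l p))"
  proof -
    have s: "Bf X N (\<lambda>p. \<Sum>l<d. w l p) (\<lambda>p. \<Sum>l<d. w l p) = (\<Sum>l<d. \<Sum>m<d. Bf X N (w l) (w m))"
      unfolding Bf_sum_left Bf_sum_right ..
    have s2: "(\<Sum>l<d. \<Sum>m<d. Re (Bf X N (w m) (w l))) = (\<Sum>l<d. \<Sum>m<d. Re (Bf X N (w l) (w m)))"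
      by (rule sum.swap)
    show ?thesis unfolding s
      by (simp add: sum_subtractf sum.distrib s2 sum_distrib_left[symmetric] Re_sum)
  qed
  finally show ?thesis by simp
qed

lemma idx_lt2: fixes a i n d :: nat assumes "a < n" "i < d" shows "a*d+i < n*d"
proof -
  have "a*d+i < a*d + d" using assms by simp
  also have "\<dots> = (a+1)*d" by simp
  also have "\<dots> \<le> n*d" using assms by (intro mult_right_mono) auto
  finally show ?thesis .
qed

lemma amp_entry: assumes p: "p < n*d" and q: "q < n*d"
  shows "ampliation n d (Phi_t d t) X $$ (p,q) =
    (if p mod d = q mod d then (\<Sum>m<d. X $$ ((p div d)*d+m, (q div d)*d+m)) else 0) - of_real t * X $$ (p,q)"
proof -
  have d: "d > 0" using p by (cases d) auto
  let ?B = "mat d d (\<lambda>(i,j). X $$ ((p div d)*d + i, (q div d)*d + j))"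
  have pm: "p mod d < d" "q mod d < d" using d by auto
  have "ampliation n d (Phi_t d t) X $$ (p,q) = Phi_t d t ?B $$ (p mod d, q mod d)"
    unfolding ampliation_def using p q by simp
  also have "\<dots> = mtrace ?B * (if p mod d = q mod d then 1 else 0) - of_real t * ?B $$ (p mod d, q mod d)"
    unfolding Phi_t_def using pm by simp
  also have "?B $$ (p mod d, q mod d) = X $$ (p,q)" using pm by simp
  also have "mtrace ?B = (\<Sum>m<d. X $$ ((p div d)*d+m, (q div d)*d+m))" unfolding mtrace_def by simp
  finally show ?thesis by simp
qed

lemma Bf_split: fixes n d :: nat
  shows "Bf X (n*d) x y = (\<Sum>a<n. \<Sum>i<d. \<Sum>b<n. \<Sum>j<d. X $$ (a*d+i, b*d+j) * y (b*d+j) * cnj (x (a*d+i)))"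
  unfolding Bf_def sum_split_mult[of _ n d] ..

lemma cp_phi: assumes d: "d \<ge> 1" and t: "t \<le> 1 / real d"
  shows "completely_positive d (Phi_t d t)"
  unfolding completely_positive_def
proof (intro allI impI)
  fix n X assume psd: "psd (n*d) X"
  let ?N = "n*d"
  let ?Y = "ampliation n d (Phi_t d t) X"
  from psd have X: "X \<in> carrier_mat ?N ?N" and hX: "adj X = X" unfolding psd_def by auto
  have Xe: "cnj (X $$ (q,p)) = X $$ (p,q)" if "p < ?N" "q < ?N" for p q
    using arg_cong[OF hX, of "\<lambda>M. M $$ (p,q)"] that X by auto
  have Y: "?Y \<in> carrier_mat ?N ?N" unfolding ampliation_def by simp
  have dm: "(a*d+i) div d = a" "(a*d+i) mod d = i" if "i < d" for a i using that by auto
  have hY: "adj ?Y = ?Y"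
  proof (rule eq_matI)
    fix p q assume p: "p < dim_row ?Y" and q: "q < dim_col ?Y"
    hence p': "p < ?N" and q': "q < ?N" using Y by auto
    have d0: "d > 0" using d by simp
    have pd: "p div d < n" "q div d < n" using p' q' by (auto simp: less_mult_imp_div_less)
    have "adj ?Y $$ (p,q) = cnj (?Y $$ (q,p))" using p' q' Y by simp
    also have "\<dots> = (if q mod d = p mod d then (\<Sum>m<d. cnj (X $$ ((q div d)*d+m, (p div d)*d+m))) else 0)
        - of_real t * cnj (X $$ (q,p))"
      unfolding amp_entry[OF q' p'] by (simp add: cnj_sum)
    also have "\<dots> = (if p mod d = q mod d then (\<Sum>m<d. X $$ ((p div d)*d+m, (q div d)*d+m)) else 0)
        - of_real t * X $$ (p,q)"
      using Xe[OF p' q'] Xe idx_lt2[OF pd(1)] idx_lt2[OF pd(2)] by (auto intro!: sum.cong)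
    also have "\<dots> = ?Y $$ (p,q)" unfolding amp_entry[OF p' q'] ..
    finally show "adj ?Y $$ (p,q) = ?Y $$ (p,q)" .
  qed (insert Y, auto)
  have qf: "Im (qform ?Y v) = 0 \<and> Re (qform ?Y v) \<ge> 0" if v: "v \<in> carrier_vec ?N" for v
  proof -
    define V where "V p = v $ p" for p
    define u where "u l m p = (if p mod d = m then V ((p div d)*d + l) else 0)" for l m p
    have uv: "(\<Sum>l<d. u l l p) = V p" for p
    proof -
      have d0: "d > 0" using d by simp
      have "(\<Sum>l<d. u l l p) = (\<Sum>l<d. if l = p mod d then V ((p div d)*d + l) else 0)"
        unfolding u_def by (intro sum.cong) auto
      also have "\<dots> = V ((p div d)*d + p mod d)" using d0 by (simp add: sum.delta)
      finally show ?thesis by simp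
    qed
    have Bu: "Bf X ?N (u l m) (u l m) = (\<Sum>a<n. \<Sum>b<n. X $$ (a*d+m, b*d+m) * V (b*d+l) * cnj (V (a*d+l)))"
      if m: "m < d" for l m
    proof -
      have "Bf X ?N (u l m) (u l m) = (\<Sum>a<n. \<Sum>i<d. \<Sum>b<n. \<Sum>j<d.
          X $$ (a*d+i, b*d+j) * u l m (b*d+j) * cnj (u l m (a*d+i)))" by (rule Bf_split)
      also have "\<dots> = (\<Sum>a<n. \<Sum>i<d. if i = m then (\<Sum>b<n. X $$ (a*d+m, b*d+m) * V (b*d+l) * cnj (V (a*d+l))) else 0)"
      proof (intro sum.cong refl)
        fix a i assume i: "i \<in> {..<d}"
        show "(\<Sum>b<n. \<Sum>j<d. X $$ (a*d+i, b*d+j) * u l m (b*d+j) * cnj (u l m (a*d+i)))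
          = (if i = m then (\<Sum>b<n. X $$ (a*d+m, b*d+m) * V (b*d+l) * cnj (V (a*d+l))) else 0)"
        proof (cases "i = m")
          case True
          have "(\<Sum>b<n. \<Sum>j<d. X $$ (a*d+i, b*d+j) * u l m (b*d+j) * cnj (u l m (a*d+i)))
            = (\<Sum>b<n. \<Sum>j<d. if j = m then X $$ (a*d+m, b*d+m) * V (b*d+l) * cnj (V (a*d+l)) else 0)"
            using True i by (intro sum.cong refl) (auto simp: u_def dm)
          also have "\<dots> = (\<Sum>b<n. X $$ (a*d+m, b*d+m) * V (b*d+l) * cnj (V (a*d+l)))"
            using m by (simp add: sum.delta)
          finally show ?thesis using True by simp
        next
          case False
          thus ?thesis using i by (simp add: u_def dm)
        qed
      qed
      also have "\<dots> = (\<Sum>a<n. \<Sum>b<n. X $$ (a*d+m, b*d+m) * V (b*d+l) * cnj (V (a*d+l)))"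
        using m by (simp add: sum.delta)
      finally show ?thesis .
    qed
    define T1 where "T1 = (\<Sum>l<d. \<Sum>m<d. Bf X ?N (u l m) (u l m))"
    have qY: "qform ?Y v = T1 - of_real t * Bf X ?N V V"
    proof -
      have "qform ?Y v = Bf ?Y ?N V V" unfolding V_def by (rule qform_Bf[OF Y v])
      also have "\<dots> = (\<Sum>a<n. \<Sum>i<d. \<Sum>b<n. \<Sum>j<d. ?Y $$ (a*d+i, b*d+j) * V (b*d+j) * cnj (V (a*d+i)))"
        by (rule Bf_split)
      also have "\<dots> = (\<Sum>a<n. \<Sum>i<d. \<Sum>b<n. \<Sum>j<d.
          (if i = j then (\<Sum>m<d. X $$ (a*d+m, b*d+m)) * V (b*d+j) * cnj (V (a*d+i)) else 0)
          - of_real t * (X $$ (a*d+i, b*d+j) * V (b*d+j) * cnj (V (a*d+i))))"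
      proof (intro sum.cong refl)
        fix a i b j assume a: "a \<in> {..<n}" and i: "i \<in> {..<d}" and b: "b \<in> {..<n}" and j: "j \<in> {..<d}"
        have e: "?Y $$ (a*d+i, b*d+j) = (if i = j then (\<Sum>m<d. X $$ (a*d+m, b*d+m)) else 0) - of_real t * X $$ (a*d+i,b*d+j)"
          using amp_entry[OF idx_lt2[of a n i d] idx_lt2[of b n j d]] a i b j dm by simp
        show "?Y $$ (a*d+i, b*d+j) * V (b*d+j) * cnj (V (a*d+i)) =
          (if i = j then (\<Sum>m<d. X $$ (a*d+m, b*d+m)) * V (b*d+j) * cnj (V (a*d+i)) else 0)
          - of_real t * (X $$ (a*d+i, b*d+j) * V (b*d+j) * cnj (V (a*d+i)))"
          unfolding e by (cases "i = j") (simp_all add: algebra_simps)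
      qed
      also have "\<dots> = (\<Sum>a<n. \<Sum>i<d. \<Sum>b<n. (\<Sum>m<d. X $$ (a*d+m, b*d+m)) * V (b*d+i) * cnj (V (a*d+i)))
          - of_real t * Bf X ?N V V"
        unfolding Bf_split by (simp add: sum_subtractf sum_distrib_left sum.delta)
      also have "(\<Sum>a<n. \<Sum>i<d. \<Sum>b<n. (\<Sum>m<d. X $$ (a*d+m, b*d+m)) * V (b*d+i) * cnj (V (a*d+i))) = T1"
      proof -
        have "(\<Sum>a<n. \<Sum>i<d. \<Sum>b<n. (\<Sum>m<d. X $$ (a*d+m, b*d+m)) * V (b*d+i) * cnj (V (a*d+i)))
          = (\<Sum>a<n. \<Sum>i<d. \<Sum>b<n. \<Sum>m<d. X $$ (a*d+m, b*d+m) * V (b*d+i) * cnj (V (a*d+i)))"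
          by (simp add: sum_distrib_right)
        also have "\<dots> = (\<Sum>i<d. \<Sum>a<n. \<Sum>b<n. \<Sum>m<d. X $$ (a*d+m, b*d+m) * V (b*d+i) * cnj (V (a*d+i)))"
          by (rule sum.swap)
        also have "\<dots> = (\<Sum>i<d. \<Sum>a<n. \<Sum>m<d. \<Sum>b<n. X $$ (a*d+m, b*d+m) * V (b*d+i) * cnj (V (a*d+i)))"
          by (rule sum.cong[OF refl], rule sum.cong[OF refl], rule sum.swap)
        also have "\<dots> = (\<Sum>i<d. \<Sum>m<d. \<Sum>a<n. \<Sum>b<n. X $$ (a*d+m, b*d+m) * V (b*d+i) * cnj (V (a*d+i)))"
          by (rule sum.cong[OF refl], rule sum.swap)
        also have "\<dots> = T1" unfolding T1_def by (intro sum.cong refl) (simp add: Bu)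
        finally show ?thesis .
      qed
      finally show ?thesis .
    qed
    have Bnn: "Im (Bf X ?N w w) = 0" "Re (Bf X ?N w w) \<ge> 0" for w using psd_Bf[OF psd] by auto
    have imT: "Im T1 = 0" unfolding T1_def by (simp add: Im_sum Bnn)
    have reT: "Re T1 \<ge> (\<Sum>l<d. Re (Bf X ?N (u l l) (u l l)))"
    proof -
      have "Re T1 = (\<Sum>l<d. \<Sum>m<d. Re (Bf X ?N (u l m) (u l m)))" unfolding T1_def by (simp add: Re_sum)
      also have "\<dots> \<ge> (\<Sum>l<d. Re (Bf X ?N (u l l) (u l l)))"
      proof (rule sum_mono)
        fix l assume "l \<in> {..<d}"
        thus "Re (Bf X ?N (u l l) (u l l)) \<le> (\<Sum>m<d. Re (Bf X ?N (u l m) (u l m)))"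
          using member_le_sum[of l "{..<d}" "\<lambda>m. Re (Bf X ?N (u l m) (u l m))"] Bnn by auto
      qed
      finally show ?thesis .
    qed
    have conv: "Re (Bf X ?N V V) \<le> real d * (\<Sum>l<d. Re (Bf X ?N (u l l) (u l l)))"
      using Bf_convex[OF psd, where d=d and w="\<lambda>l. u l l"] unfolding uv by simp
    have imY: "Im (qform ?Y v) = 0" unfolding qY using imT Bnn by simp
    have "Re (qform ?Y v) = Re T1 - t * Re (Bf X ?N V V)" unfolding qY by simp
    also have "\<dots> \<ge> 0"
    proof (cases "t \<le> 0")
      case True
      have "t * Re (Bf X ?N V V) \<le> 0" using True Bnn(2)[of V] by (simp add: mult_nonpos_nonneg)
      moreover have "Re T1 \<ge> 0"
      proof -
        have "0 \<le> (\<Sum>l<d. Re (Bf X ?N (u l l) (u l l)))" using Bnn(2) by (intro sum_nonneg) auto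
        thus ?thesis using reT by linarith
      qed
      ultimately show ?thesis by simp
    next
      case False
      have "t * Re (Bf X ?N V V) \<le> (1 / real d) * Re (Bf X ?N V V)"
        using t Bnn(2)[of V] by (intro mult_right_mono) auto
      also have "\<dots> \<le> (\<Sum>l<d. Re (Bf X ?N (u l l) (u l l)))" using conv d by (simp add: field_simps)
      finally show ?thesis using reT by simp
    qed
    finally show ?thesis using imY by simp
  qed
  show "psd (n*d) ?Y" unfolding psd_def using Y hY qf by blast
qed

lemma tstar_kt: fixes k :: nat assumes "0 \<le> \<theta>" "\<theta> < 1"
  shows "tstar (real k + \<theta>) = (real k + \<theta>\<^sup>2) / (real k + \<theta>)\<^sup>2"
proof -
  have "\<lfloor>real k + \<theta>\<rfloor> = int k" using assms by (simp add: floor_eq_iff)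
  thus ?thesis unfolding tstar_def Let_def by simp
qed

lemma decomp: assumes "1 \<le> \<alpha>"
  shows "\<alpha> = real (nat \<lfloor>\<alpha>\<rfloor>) + (\<alpha> - real (nat \<lfloor>\<alpha>\<rfloor>))" "0 \<le> \<alpha> - real (nat \<lfloor>\<alpha>\<rfloor>)"
    "\<alpha> - real (nat \<lfloor>\<alpha>\<rfloor>) < 1" "nat \<lfloor>\<alpha>\<rfloor> \<ge> 1"
proof -
  have f: "(1::int) \<le> \<lfloor>\<alpha>\<rfloor>" using assms by (simp add: le_floor_iff)
  hence e: "real (nat \<lfloor>\<alpha>\<rfloor>) = real_of_int \<lfloor>\<alpha>\<rfloor>" by simp
  show "\<alpha> = real (nat \<lfloor>\<alpha>\<rfloor>) + (\<alpha> - real (nat \<lfloor>\<alpha>\<rfloor>))" by simp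
  show "0 \<le> \<alpha> - real (nat \<lfloor>\<alpha>\<rfloor>)" "\<alpha> - real (nat \<lfloor>\<alpha>\<rfloor>) < 1" unfolding e by linarith+
  have "nat 1 \<le> nat \<lfloor>\<alpha>\<rfloor>" using f by (rule nat_mono)
  thus "nat \<lfloor>\<alpha>\<rfloor> \<ge> 1" by simp
qed

lemma tstar_bounds: fixes k :: nat assumes k: "k \<ge> 1" and th: "0 \<le> \<theta>" "\<theta> < 1"
  shows "1 / real (k+1) < tstar (real k + \<theta>)" "tstar (real k + \<theta>) \<le> 1 / real k"
proof -
  have p: "(real k + \<theta>)\<^sup>2 > 0" using k th by simp
  have "real k * (1 - \<theta>)\<^sup>2 > 0" using k th by simp
  hence "(real k + \<theta>)\<^sup>2 < (real k + 1) * (real k + \<theta>\<^sup>2)"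
    by (simp add: power2_eq_square algebra_simps)
  thus "1 / real (k+1) < tstar (real k + \<theta>)" unfolding tstar_kt[OF th] using p k
    by (simp add: field_simps)
  have "\<theta> * \<theta> \<le> \<theta> * 1" using th by (intro mult_left_mono) auto
  hence "real k * \<theta>\<^sup>2 \<le> real k * \<theta>" using th k by (intro mult_left_mono) (auto simp: power2_eq_square)
  moreover have "(real k + \<theta>)\<^sup>2 = real k * real k + 2 * (real k * \<theta>) + \<theta>\<^sup>2"
    by (simp add: power2_eq_square algebra_simps)
  moreover have "real k * (real k + \<theta>\<^sup>2) = real k * real k + real k * \<theta>\<^sup>2" by (simp add: algebra_simps)
  moreover have "0 \<le> \<theta>\<^sup>2" "0 \<le> real k * \<theta>" using th by auto
  ultimately have "real k * (real k + \<theta>\<^sup>2) \<le> (real k + \<theta>)\<^sup>2" by linarith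
  thus "tstar (real k + \<theta>) \<le> 1 / real k" unfolding tstar_kt[OF th] using p k
    by (simp add: field_simps)
qed

lemma tstar_same: fixes k :: nat assumes k: "k \<ge> 1" and ab: "0 \<le> a" "a < b" "b < 1"
  shows "tstar (real k + b) < tstar (real k + a)"
proof -
  have id: "(real k + a\<^sup>2) * (real k + b)\<^sup>2 - (real k + b\<^sup>2) * (real k + a)\<^sup>2
     = real k * (b - a) * (2 * real k - (real k - 1) * (a + b) - 2 * a * b)"
    by (simp add: power2_eq_square algebra_simps)
  define P where "P = (real k - 1) * (a + b)"
  define Q where "Q = a * b"
  have "(real k - 1) * (a + b) \<le> (real k - 1) * 2" using k ab by (intro mult_left_mono) auto
  hence P: "P \<le> 2 * real k - 2" unfolding P_def by (simp add: algebra_simps)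
  have "a * b \<le> 1 * b" using ab by (intro mult_right_mono) auto
  hence Q: "Q \<le> b" unfolding Q_def by simp
  have "2 * real k - P - 2 * Q > 0" using P Q ab by linarith
  hence "2 * real k - (real k - 1) * (a + b) - 2 * a * b > 0" unfolding P_def Q_def by (simp add: mult.assoc)
  hence "real k * (b - a) * (2 * real k - (real k - 1) * (a + b) - 2 * a * b) > 0" using k ab by simp
  hence "(real k + b\<^sup>2) * (real k + a)\<^sup>2 < (real k + a\<^sup>2) * (real k + b)\<^sup>2" using id by linarith
  moreover have "(real k + a)\<^sup>2 > 0" "(real k + b)\<^sup>2 > 0" using k ab by auto
  ultimately show ?thesis unfolding tstar_kt[OF order.strict_implies_order[OF order.strict_trans1[OF ab(1,2)]] ab(3)]
      tstar_kt[OF ab(1) order.strict_trans[OF ab(2,3)]]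
    by (simp add: field_simps)
qed

lemma tstar_strict: assumes "1 \<le> \<alpha>" "\<alpha> < \<beta>" shows "tstar \<beta> < tstar \<alpha>"
proof -
  have b1: "1 \<le> \<beta>" using assms by simp
  define k1 where "k1 = nat \<lfloor>\<alpha>\<rfloor>"
  define k2 where "k2 = nat \<lfloor>\<beta>\<rfloor>"
  define a where "a = \<alpha> - real k1"
  define b where "b = \<beta> - real k2"
  note da = decomp[OF assms(1), folded k1_def, folded a_def]
  note db = decomp[OF b1, folded k2_def, folded b_def]
  have k12: "k1 \<le> k2" unfolding k1_def k2_def using assms by (intro nat_mono floor_mono) simp
  show ?thesis
  proof (cases "k1 = k2")
    case True
    hence "a < b" using assms unfolding a_def b_def by simp
    thus ?thesis using tstar_same[OF da(4) da(2) _ db(3)] da(1) db(1) True by metis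
  next
    case False
    hence "k1 + 1 \<le> k2" using k12 by simp
    hence "1 / real k2 \<le> 1 / real (k1 + 1)" using da(4) by (intro divide_left_mono) auto
    moreover have "tstar \<beta> \<le> 1 / real k2" using tstar_bounds(2)[OF db(4) db(2) db(3)] db(1) by simp
    moreover have "1 / real (k1 + 1) < tstar \<alpha>" using tstar_bounds(1)[OF da(4) da(2) da(3)] da(1) by simp
    ultimately show ?thesis by linarith
  qed
qed

lemma tstar_mono: assumes "1 \<le> \<alpha>" "\<alpha> \<le> \<beta>" shows "tstar \<beta> \<le> tstar \<alpha>"
  using tstar_strict[OF assms(1)] assms(2) by (cases "\<alpha> = \<beta>") (auto simp: less_imp_le)

lemma tstar_nat: fixes k :: nat assumes "k \<ge> 1" shows "tstar (real k) = 1 / real k"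
  using tstar_kt[of 0 k] assms by (simp add: power2_eq_square)

lemma inP_tstar: assumes a: "1 \<le> \<alpha>" "\<alpha> \<le> real d"
  shows "in_P d \<alpha> (Phi_t d t) \<longleftrightarrow> t \<le> tstar \<alpha>"
proof
  assume h: "in_P d \<alpha> (Phi_t d t)"
  obtain \<psi> where \<psi>: "\<psi> \<in> V_alpha d \<alpha>" and e: "(cmod (mtrace (coeff_mat d \<psi>)))\<^sup>2 * tstar \<alpha> = 1"
    using witness[OF a] by blast
  define c where "c = (cmod (mtrace (coeff_mat d \<psi>)))\<^sup>2"
  have tc: "t * c \<le> 1" using h \<psi> unfolding inP_iff c_def by blast
  have c0: "c \<ge> 0" unfolding c_def by simp
  have ec: "c * tstar \<alpha> = 1" using e unfolding c_def .
  hence cpos: "c > 0" using c0 by (cases "c = 0") auto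
  have "t * c \<le> tstar \<alpha> * c" using tc ec by (simp add: mult.commute)
  thus "t \<le> tstar \<alpha>" using cpos by simp
next
  assume h: "t \<le> tstar \<alpha>"
  show "in_P d \<alpha> (Phi_t d t)" unfolding inP_iff
  proof
    fix \<psi> assume \<psi>: "\<psi> \<in> V_alpha d \<alpha>"
    define c where "c = (cmod (mtrace (coeff_mat d \<psi>)))\<^sup>2"
    have c0: "c \<ge> 0" unfolding c_def by simp
    have "c * tstar \<alpha> \<le> 1" unfolding c_def by (rule adm_bound[OF a]) (use \<psi> V_alpha_def in auto)
    moreover have "t * c \<le> tstar \<alpha> * c" using h c0 by (rule mult_right_mono)
    ultimately show "t * (cmod (mtrace (coeff_mat d \<psi>)))\<^sup>2 \<le> 1" unfolding c_def by (simp add: mult.commute)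
  qed
qed

lemma SI_eq: "stability_index d (Phi_t d t) = Sup {\<alpha>. 1 \<le> \<alpha> \<and> \<alpha> \<le> real d \<and> t \<le> tstar \<alpha>}"
proof -
  have "{\<alpha>. 1 \<le> \<alpha> \<and> \<alpha> \<le> real d \<and> in_P d \<alpha> (Phi_t d t)} = {\<alpha>. 1 \<le> \<alpha> \<and> \<alpha> \<le> real d \<and> t \<le> tstar \<alpha>}"
    using inP_tstar by blast
  thus ?thesis unfolding stability_index_def by simp
qed

lemma tstar_one: "tstar 1 = 1" using tstar_nat[of 1] by simp

lemma tstar_inj: assumes "1 \<le> \<alpha>" "1 \<le> \<beta>" "tstar \<alpha> = tstar \<beta>" shows "\<alpha> = \<beta>"
proof (rule ccontr)
  assume "\<alpha> \<noteq> \<beta>"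
  hence "\<alpha> < \<beta> \<or> \<beta> < \<alpha>" by linarith
  thus False
  proof
    assume "\<alpha> < \<beta>" thus False using tstar_strict[OF assms(1)] assms(3) by fastforce
  next
    assume "\<beta> < \<alpha>" thus False using tstar_strict[OF assms(2)] assms(3) by fastforce
  qed
qed

lemma SI_small: assumes d: "d \<ge> 1" and t: "t \<le> 1 / real d"
  shows "stability_index d (Phi_t d t) = real d"
proof -
  have "{\<alpha>. 1 \<le> \<alpha> \<and> \<alpha> \<le> real d \<and> t \<le> tstar \<alpha>} = {1..real d}"
  proof (intro Set.set_eqI iffI)
    fix \<alpha> assume "\<alpha> \<in> {1..real d}"
    hence a: "1 \<le> \<alpha>" "\<alpha> \<le> real d" by auto
    have "tstar (real d) \<le> tstar \<alpha>" by (rule tstar_mono[OF a])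
    hence "1 / real d \<le> tstar \<alpha>" using tstar_nat[OF d] by simp
    thus "\<alpha> \<in> {\<alpha>. 1 \<le> \<alpha> \<and> \<alpha> \<le> real d \<and> t \<le> tstar \<alpha>}" using a t by simp
  qed auto
  thus ?thesis unfolding SI_eq using d by simp
qed

lemma SI_root: assumes a: "1 \<le> a" "a \<le> real d" and ta: "tstar a = t"
  shows "stability_index d (Phi_t d t) = a"
proof -
  have "{\<alpha>. 1 \<le> \<alpha> \<and> \<alpha> \<le> real d \<and> t \<le> tstar \<alpha>} = {1..a}"
  proof (intro Set.set_eqI iffI)
    fix \<alpha> assume "\<alpha> \<in> {1..a}"
    hence b: "1 \<le> \<alpha>" "\<alpha> \<le> a" by auto
    have "tstar a \<le> tstar \<alpha>" by (rule tstar_mono[OF b])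
    thus "\<alpha> \<in> {\<alpha>. 1 \<le> \<alpha> \<and> \<alpha> \<le> real d \<and> t \<le> tstar \<alpha>}" using b a ta by simp
  next
    fix \<alpha> assume "\<alpha> \<in> {\<alpha>. 1 \<le> \<alpha> \<and> \<alpha> \<le> real d \<and> t \<le> tstar \<alpha>}"
    hence b: "1 \<le> \<alpha>" "t \<le> tstar \<alpha>" by auto
    have "\<not> a < \<alpha>" using tstar_strict[OF a(1)] b ta by force
    thus "\<alpha> \<in> {1..a}" using b by simp
  qed
  thus ?thesis unfolding SI_eq using a by simp
qed

lemma quad_iff: fixes k :: nat assumes k: "k \<ge> 1" and th: "0 \<le> \<theta>" "\<theta> < 1"
  shows "((t - 1) * \<theta>\<^sup>2 + 2 * t * real k * \<theta> + (t * (real k)\<^sup>2 - real k) = 0) \<longleftrightarrow> t = tstar (real k + \<theta>)"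
proof -
  have p: "(real k + \<theta>)\<^sup>2 > 0" using k th by simp
  have "t = tstar (real k + \<theta>) \<longleftrightarrow> t * (real k + \<theta>)\<^sup>2 = real k + \<theta>\<^sup>2"
    unfolding tstar_kt[OF th] using p by (simp add: field_simps)
  also have "\<dots> \<longleftrightarrow> (t - 1) * \<theta>\<^sup>2 + 2 * t * real k * \<theta> + (t * (real k)\<^sup>2 - real k) = 0"
  proof -
    have "t * (real k + \<theta>)\<^sup>2 - (real k + \<theta>\<^sup>2) = (t - 1) * \<theta>\<^sup>2 + 2 * t * real k * \<theta> + (t * (real k)\<^sup>2 - real k)"
      by (simp add: power2_eq_square algebra_simps)
    thus ?thesis by linarith
  qed
  finally show ?thesis by simp
qed

lemma theta_formula: fixes k :: nat assumes k: "k \<ge> 1" and t1: "1 / real (k+1) < t" and t2: "t \<le> 1 / real k"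
  and t3: "t < 1"
  defines "\<theta> \<equiv> (t * real k - sqrt (real k * (t * real (k+1) - 1))) / (1 - t)"
  shows "0 \<le> \<theta>" "\<theta> < 1" "(t - 1) * \<theta>\<^sup>2 + 2 * t * real k * \<theta> + (t * (real k)\<^sup>2 - real k) = 0"
proof -
  define x where "x = t * real (k+1) - 1"
  define D where "D = real k * x"
  define s where "s = sqrt D"
  define u where "u = 1 - t"
  have u: "u > 0" unfolding u_def using t3 by simp
  have x: "x > 0" unfolding x_def using t1 k by (simp add: field_simps)
  have D: "D > 0" unfolding D_def using x k by simp
  have s2: "s\<^sup>2 = D" unfolding s_def using real_sqrt_pow2[OF less_imp_le[OF D]] .
  have s0: "s \<ge> 0" unfolding s_def using D by simp
  have tk: "t * real k \<le> 1" using t2 k by (simp add: field_simps)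
  have "1 / real (k+1) > 0" by simp
  hence tpos: "t > 0" using t1 by linarith
  have th: "\<theta> = (t * real k - s) / u" unfolding \<theta>_def s_def D_def x_def u_def ..
  have uth: "u * \<theta> = t * real k - s" unfolding th using u by simp
  have "(t * real k)\<^sup>2 - D = real k * (1 - t) * (1 - t * real k)"
    unfolding D_def x_def by (simp add: power2_eq_square algebra_simps)
  also have "\<dots> \<ge> 0" using t3 tk k by simp
  finally have "D \<le> (t * real k)\<^sup>2" by simp
  hence "s \<le> \<bar>t * real k\<bar>" unfolding s_def by (metis real_sqrt_abs real_sqrt_le_mono)
  hence "s \<le> t * real k" using tpos by simp
  thus "0 \<le> \<theta>" unfolding th using u by simp
  have "(1 - t) * (real k + 1) > 0" using t3 by (intro mult_pos_pos) auto
  hence "x < real k" unfolding x_def by (simp add: algebra_simps)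
  hence "x * x < real k * x" using x by (simp add: mult_strict_right_mono)
  hence "x\<^sup>2 < D" unfolding D_def by (simp add: power2_eq_square)
  hence "x < s" unfolding s_def by (rule real_less_rsqrt)
  hence "t * real k - s < u" unfolding x_def u_def by (simp add: algebra_simps)
  thus "\<theta> < 1" unfolding th using u by simp
  have "u * ((t - 1) * \<theta>\<^sup>2 + 2 * t * real k * \<theta> + (t * (real k)\<^sup>2 - real k))
      = - (u * \<theta>)\<^sup>2 + 2 * t * real k * (u * \<theta>) + u * (t * (real k)\<^sup>2 - real k)"
    unfolding u_def by (simp add: power2_eq_square algebra_simps)
  also have "\<dots> = - (t * real k - s)\<^sup>2 + 2 * t * real k * (t * real k - s) + u * (t * (real k)\<^sup>2 - real k)"
    unfolding uth ..
  also have "\<dots> = - s\<^sup>2 + real k * (t * real k + t - 1)"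
    unfolding u_def by (simp add: power2_eq_square algebra_simps)
  also have "\<dots> = 0" unfolding s2 D_def x_def by (simp add: algebra_simps)
  finally show "(t - 1) * \<theta>\<^sup>2 + 2 * t * real k * \<theta> + (t * (real k)\<^sup>2 - real k) = 0" using u by simp
qed

theorem corollary4p9:
  fixes d :: nat and t :: real
  assumes d2: "d \<ge> 2"
  shows
    "(t \<le> 0 \<longrightarrow> completely_positive d (Phi_t d t) \<and> stability_index d (Phi_t d t) = real d) \<and>
     (0 < t \<and> t \<le> 1 / real d \<longrightarrow>
        completely_positive d (Phi_t d t) \<and> stability_index d (Phi_t d t) = real d) \<and>
     (1 / real d < t \<and> t < 1 \<longrightarrow>
        (\<exists>!\<alpha>. 1 < \<alpha> \<and> \<alpha> < real d \<and> t = tstar \<alpha>) \<and>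
        stability_index d (Phi_t d t) = (THE \<alpha>. 1 < \<alpha> \<and> \<alpha> < real d \<and> t = tstar \<alpha>) \<and>
        (\<forall>k::nat. 1 \<le> k \<and> k \<le> d - 1 \<and> 1 / real (k+1) < t \<and> t \<le> 1 / real k \<longrightarrow>
           (\<exists>!\<theta>::real. 0 \<le> \<theta> \<and> \<theta> < 1 \<and>
               (t - 1) * \<theta>\<^sup>2 + 2 * t * real k * \<theta> + (t * (real k)\<^sup>2 - real k) = 0) \<and>
           stability_index d (Phi_t d t) = real k + (THE \<theta>::real. 0 \<le> \<theta> \<and> \<theta> < 1 \<and>
               (t - 1) * \<theta>\<^sup>2 + 2 * t * real k * \<theta> + (t * (real k)\<^sup>2 - real k) = 0) \<and>
           (t < 1 / real k \<longrightarrow>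
              (THE \<theta>::real. 0 \<le> \<theta> \<and> \<theta> < 1 \<and>
                 (t - 1) * \<theta>\<^sup>2 + 2 * t * real k * \<theta> + (t * (real k)\<^sup>2 - real k) = 0)
              = (t * real k - sqrt (real k * (t * real (k+1) - 1))) / (1 - t)) \<and>
           (t = 1 / real k \<longrightarrow>
              (THE \<theta>::real. 0 \<le> \<theta> \<and> \<theta> < 1 \<and>
                 (t - 1) * \<theta>\<^sup>2 + 2 * t * real k * \<theta> + (t * (real k)\<^sup>2 - real k) = 0) = 0 \<and>
              stability_index d (Phi_t d t) = real k))) \<and>
     stability_index d (Phi_t d 1) = 1"
proof -
  have d1: "d \<ge> 1" using d2 by simp
  have dpos: "1 / real d > 0" using d1 by simp
  have P12: "completely_positive d (Phi_t d t) \<and> stability_index d (Phi_t d t) = real d"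
    if "t \<le> 1 / real d" using cp_phi[OF d1 that] SI_small[OF d1 that] by blast
  have P4: "stability_index d (Phi_t d 1) = 1"
    by (rule SI_root) (use d1 tstar_one in auto)
  have P3: "(\<exists>!\<alpha>. 1 < \<alpha> \<and> \<alpha> < real d \<and> t = tstar \<alpha>) \<and>
        stability_index d (Phi_t d t) = (THE \<alpha>. 1 < \<alpha> \<and> \<alpha> < real d \<and> t = tstar \<alpha>) \<and>
        (\<forall>k::nat. 1 \<le> k \<and> k \<le> d - 1 \<and> 1 / real (k+1) < t \<and> t \<le> 1 / real k \<longrightarrow>
           (\<exists>!\<theta>::real. 0 \<le> \<theta> \<and> \<theta> < 1 \<and>
               (t - 1) * \<theta>\<^sup>2 + 2 * t * real k * \<theta> + (t * (real k)\<^sup>2 - real k) = 0) \<and>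
           stability_index d (Phi_t d t) = real k + (THE \<theta>::real. 0 \<le> \<theta> \<and> \<theta> < 1 \<and>
               (t - 1) * \<theta>\<^sup>2 + 2 * t * real k * \<theta> + (t * (real k)\<^sup>2 - real k) = 0) \<and>
           (t < 1 / real k \<longrightarrow>
              (THE \<theta>::real. 0 \<le> \<theta> \<and> \<theta> < 1 \<and>
                 (t - 1) * \<theta>\<^sup>2 + 2 * t * real k * \<theta> + (t * (real k)\<^sup>2 - real k) = 0)
              = (t * real k - sqrt (real k * (t * real (k+1) - 1))) / (1 - t)) \<and>
           (t = 1 / real k \<longrightarrow>
              (THE \<theta>::real. 0 \<le> \<theta> \<and> \<theta> < 1 \<and>
                 (t - 1) * \<theta>\<^sup>2 + 2 * t * real k * \<theta> + (t * (real k)\<^sup>2 - real k) = 0) = 0 \<and>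
              stability_index d (Phi_t d t) = real k))" (is ?P3)
    if td: "1 / real d < t" and t1: "t < 1"
  proof -
    have tpos: "t > 0" using td dpos by linarith
    define k0 where "k0 = nat \<lfloor>1 / t\<rfloor>"
    have gt1: "1 / t > 1" using tpos t1 by (simp add: field_simps)
    have ltd: "1 / t < real d" using td tpos d1 by (simp add: field_simps)
    note dc = decomp[OF less_imp_le[OF gt1], folded k0_def]
    have k01: "k0 \<ge> 1" using dc(4) .
    have k0a: "real k0 \<le> 1 / t" "1 / t < real k0 + 1" using dc(2,3) by linarith+
    have k0d: "k0 \<le> d - 1" using k0a ltd by linarith
    have tk0: "t \<le> 1 / real k0" using k0a tpos k01 by (simp add: field_simps)
    have tk01: "1 / real (k0+1) < t" using k0a tpos by (simp add: field_simps)
    define \<theta>0 where "\<theta>0 = (t * real k0 - sqrt (real k0 * (t * real (k0+1) - 1))) / (1 - t)"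
    note tf0 = theta_formula[OF k01 tk01 tk0 t1, folded \<theta>0_def]
    define a where "a = real k0 + \<theta>0"
    have ta: "tstar a = t" unfolding a_def using quad_iff[OF k01 tf0(1,2)] tf0(3) by simp
    have a1: "1 \<le> a" unfolding a_def using k01 tf0(1) by simp
    have ad: "a < real d" unfolding a_def using tf0(2) k0d d1 by linarith
    have a1': "1 < a"
    proof (rule ccontr)
      assume "\<not> 1 < a" hence "a = 1" using a1 by simp
      thus False using ta tstar_one t1 by simp
    qed
    have ex1: "\<exists>!\<alpha>. 1 < \<alpha> \<and> \<alpha> < real d \<and> t = tstar \<alpha>"
    proof (rule ex1I[of _ a])
      show "1 < a \<and> a < real d \<and> t = tstar a" using a1' ad ta by simp
    next
      fix \<alpha> assume "1 < \<alpha> \<and> \<alpha> < real d \<and> t = tstar \<alpha>"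
      thus "\<alpha> = a" using tstar_inj[of \<alpha> a] a1 ta by simp
    qed
    have theA: "(THE \<alpha>. 1 < \<alpha> \<and> \<alpha> < real d \<and> t = tstar \<alpha>) = a"
      by (rule the1_equality[OF ex1]) (use a1' ad ta in simp)
    have SIa: "stability_index d (Phi_t d t) = a" by (rule SI_root[OF a1 less_imp_le[OF ad] ta])
    have allk: "\<forall>k::nat. 1 \<le> k \<and> k \<le> d - 1 \<and> 1 / real (k+1) < t \<and> t \<le> 1 / real k \<longrightarrow>
           (\<exists>!\<theta>::real. 0 \<le> \<theta> \<and> \<theta> < 1 \<and>
               (t - 1) * \<theta>\<^sup>2 + 2 * t * real k * \<theta> + (t * (real k)\<^sup>2 - real k) = 0) \<and>
           stability_index d (Phi_t d t) = real k + (THE \<theta>::real. 0 \<le> \<theta> \<and> \<theta> < 1 \<and>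
               (t - 1) * \<theta>\<^sup>2 + 2 * t * real k * \<theta> + (t * (real k)\<^sup>2 - real k) = 0) \<and>
           (t < 1 / real k \<longrightarrow>
              (THE \<theta>::real. 0 \<le> \<theta> \<and> \<theta> < 1 \<and>
                 (t - 1) * \<theta>\<^sup>2 + 2 * t * real k * \<theta> + (t * (real k)\<^sup>2 - real k) = 0)
              = (t * real k - sqrt (real k * (t * real (k+1) - 1))) / (1 - t)) \<and>
           (t = 1 / real k \<longrightarrow>
              (THE \<theta>::real. 0 \<le> \<theta> \<and> \<theta> < 1 \<and>
                 (t - 1) * \<theta>\<^sup>2 + 2 * t * real k * \<theta> + (t * (real k)\<^sup>2 - real k) = 0) = 0 \<and>
              stability_index d (Phi_t d t) = real k)"
    proof (intro allI impI)
      fix k :: nat assume hk: "1 \<le> k \<and> k \<le> d - 1 \<and> 1 / real (k+1) < t \<and> t \<le> 1 / real k"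
      hence k1: "k \<ge> 1" and tk1: "1 / real (k+1) < t" and tk: "t \<le> 1 / real k" by auto
      define \<theta>k where "\<theta>k = (t * real k - sqrt (real k * (t * real (k+1) - 1))) / (1 - t)"
      note tf = theta_formula[OF k1 tk1 tk t1, folded \<theta>k_def]
      let ?Q = "\<lambda>\<theta>. 0 \<le> \<theta> \<and> \<theta> < 1 \<and> (t - 1) * \<theta>\<^sup>2 + 2 * t * real k * \<theta> + (t * (real k)\<^sup>2 - real k) = 0"
      have tk_eq: "tstar (real k + \<theta>k) = t" using quad_iff[OF k1 tf(1,2)] tf(3) by simp
      have uniq: "\<theta> = \<theta>k" if "?Q \<theta>" for \<theta>
      proof -
        have "tstar (real k + \<theta>) = t" using quad_iff[OF k1, of \<theta> t] that by simp
        hence "real k + \<theta> = real k + \<theta>k" using tstar_inj[of "real k + \<theta>" "real k + \<theta>k"] tk_eq k1 that tf(1)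
          by simp
        thus ?thesis by simp
      qed
      have ex1k: "\<exists>!\<theta>. ?Q \<theta>" using tf uniq by blast
      have theK: "(THE \<theta>. ?Q \<theta>) = \<theta>k" by (rule the1_equality[OF ex1k]) (use tf in simp)
      have ak: "a = real k + \<theta>k" using tstar_inj[of a "real k + \<theta>k"] a1 k1 tf(1) ta tk_eq by simp
      have SIk: "stability_index d (Phi_t d t) = real k + (THE \<theta>. ?Q \<theta>)" unfolding theK SIa ak ..
      have last: "(THE \<theta>. ?Q \<theta>) = 0 \<and> stability_index d (Phi_t d t) = real k" if "t = 1 / real k"
      proof -
        have "?Q 0" using that k1 by (simp add: power2_eq_square)
        hence "(THE \<theta>. ?Q \<theta>) = 0" by (rule the1_equality[OF ex1k])
        thus ?thesis using SIk by simp
      qed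
      show "(\<exists>!\<theta>. ?Q \<theta>) \<and> stability_index d (Phi_t d t) = real k + (THE \<theta>. ?Q \<theta>) \<and>
           (t < 1 / real k \<longrightarrow> (THE \<theta>. ?Q \<theta>) = (t * real k - sqrt (real k * (t * real (k+1) - 1))) / (1 - t)) \<and>
           (t = 1 / real k \<longrightarrow> (THE \<theta>. ?Q \<theta>) = 0 \<and> stability_index d (Phi_t d t) = real k)"
      proof (intro conjI impI)
        show "\<exists>!\<theta>. ?Q \<theta>" by (rule ex1k)
        show "stability_index d (Phi_t d t) = real k + (THE \<theta>. ?Q \<theta>)" by (rule SIk)
        show "(THE \<theta>. ?Q \<theta>) = (t * real k - sqrt (real k * (t * real (k+1) - 1))) / (1 - t)"
          unfolding theK \<theta>k_def ..
        assume e: "t = 1 / real k"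
        show "(THE \<theta>. ?Q \<theta>) = 0" using last[OF e] by (rule conjunct1)
        show "stability_index d (Phi_t d t) = real k" using last[OF e] by (rule conjunct2)
      qed
    qed
    have SIthe: "stability_index d (Phi_t d t) = (THE \<alpha>. 1 < \<alpha> \<and> \<alpha> < real d \<and> t = tstar \<alpha>)"
      unfolding theA SIa ..
    show ?thesis by (rule conjI[OF ex1 conjI[OF SIthe allk]])
  qed
  have A: "t \<le> 0 \<longrightarrow> completely_positive d (Phi_t d t) \<and> stability_index d (Phi_t d t) = real d"
  proof
    assume "t \<le> 0" hence "t \<le> 1 / real d" using dpos by linarith
    thus "completely_positive d (Phi_t d t) \<and> stability_index d (Phi_t d t) = real d" by (rule P12)
  qed
  have B: "0 < t \<and> t \<le> 1 / real d \<longrightarrow>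
        completely_positive d (Phi_t d t) \<and> stability_index d (Phi_t d t) = real d"
  proof
    assume "0 < t \<and> t \<le> 1 / real d" hence "t \<le> 1 / real d" by simp
    thus "completely_positive d (Phi_t d t) \<and> stability_index d (Phi_t d t) = real d" by (rule P12)
  qed
  have C: "1 / real d < t \<and> t < 1 \<longrightarrow> ?P3"
  proof
    assume h: "1 / real d < t \<and> t < 1"
    show ?P3 by (rule P3) (use h in simp_all)
  qed
  show ?thesis by (rule conjI[OF A conjI[OF B conjI[OF C P4]]])
qed

end
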